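(* Let $\mathcal{P}$ be a radical parametrization in $n$ parameters over a radical tower $\mathbb{T}$ with $m$ radicals, given with a fixed representation as in the context. Then the tower variety $\mathcal{V}_\mathbb{T}\subset\mathbb{C}^{n+m}$ is irreducible and has dimension $n$. Furthermore, $\mathcal{V}_\mathbb{T}=\overline{\pi^*(\mathcal{B}_\mathcal{P})}$.
   Context: Let $\overline{t}=(t_1,\dots,t_n)$. A radical tower $\mathbb{T}$ over $\mathbb{C}(\overline{t})$ is a tower of fields $\mathbb{F}_0=\mathbb{C}(\overline{t})\subseteq\dots\subseteq\mathbb{F}_m$ with $\mathbb{F}_i=\mathbb{F}_{i-1}(\delta_i)$, $\delta_i^{e_i}=\alpha_i\in\mathbb{F}_{i-1}$, $e_i\in\mathbb{N}$. A radical parametrization $\mathcal{P}$ is a tuple $\overline{x}=(x_1,\dots,x_r)$ of elements of $\mathbb{F}_m$, $r>n$, whose Jacobian with respect to $\overline{t}$ (derivations extended to $\mathbb{F}_m$) has rank $n$; the $\delta_i$ are realized as analytic functions $\delta_i(\overline{t})$ by fixing branch values $\delta_i(\overline{t}_0)=a_i$ at some point. The representation consists of polynomials with $x_j=x_{jN}(\overline{t},\overline{\delta})/x_{jD}(\overline{t},\overline{\delta})$, $\overline{\delta}=(\delta_1,\dots,\delta_m)$ (and similarly each $\alpha_i$ written as a quotient of polynomials in $\overline{t},\delta_1,\dots,\delta_{i-1}$). Let $\varphi:\mathbb{C}^n\to\mathbb{C}^{n+m+r}$, $\overline{t}\mapsto(\overline{t},\overline{\delta}(\overline{t}),\overline{x}(\overline{t}))$,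 and $\mathcal{B}_\mathcal{P}=\overline{\mathrm{Im}(\varphi)}$ (Zariski closure), the incidence variety. Let $\psi:\mathbb{C}^n\to\mathbb{C}^{n+m}$, $\overline{t}\mapsto(\overline{t},\overline{\delta}(\overline{t}))$; the tower variety is $\mathcal{V}_\mathbb{T}=\overline{\mathrm{Im}(\psi)}$. The map $\pi^*:\mathcal{B}_\mathcal{P}\to\mathbb{C}^{n+m}$ is the projection $(\overline{t},\overline{\delta},\overline{x})\mapsto(\overline{t},\overline{\delta})$. *)

theory Defs
  imports "HOL-Analysis.Analysis"
begin

text \<open>Points of an affine space with coordinate set I are functions 'i => complex
  vanishing outside I (so C^k is modelled by an index set of cardinality k).\<close>

definition cspace :: "'i set \<Rightarrow> ('i \<Rightarrow> complex) set" where
  "cspace I = {p. \<forall>i. i \<notin> I \<longrightarrow> p i = 0}"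

inductive_set zpoly :: "'i set \<Rightarrow> (('i \<Rightarrow> complex) \<Rightarrow> complex) set" for I where
  zpoly_const: "(\<lambda>_. c) \<in> zpoly I"
| zpoly_var: "i \<in> I \<Longrightarrow> (\<lambda>p. p i) \<in> zpoly I"
| zpoly_add: "f \<in> zpoly I \<Longrightarrow> g \<in> zpoly I \<Longrightarrow> (\<lambda>p. f p + g p) \<in> zpoly I"
| zpoly_mult: "f \<in> zpoly I \<Longrightarrow> g \<in> zpoly I \<Longrightarrow> (\<lambda>p. f p * g p) \<in> zpoly I"

definition zclosed :: "'i set \<Rightarrow> ('i \<Rightarrow> complex) set \<Rightarrow> bool" where
  "zclosed I S \<longleftrightarrow> (\<exists>F. F \<subseteq> zpoly I \<and> S = {p \<in> cspace I. \<forall>f\<in>F. f p = 0})"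

definition zclosure :: "'i set \<Rightarrow> ('i \<Rightarrow> complex) set \<Rightarrow> ('i \<Rightarrow> complex) set" where
  "zclosure I A = \<Inter>{S. zclosed I S \<and> A \<subseteq> S}"

definition zirreducible :: "'i set \<Rightarrow> ('i \<Rightarrow> complex) set \<Rightarrow> bool" where
  "zirreducible I V \<longleftrightarrow> zclosed I V \<and> V \<noteq> {} \<and>
     (\<forall>S1 S2. zclosed I S1 \<and> zclosed I S2 \<and> V \<subseteq> S1 \<union> S2 \<longrightarrow> V \<subseteq> S1 \<or> V \<subseteq> S2)"

definition zchain :: "'i set \<Rightarrow> ('i \<Rightarrow> complex) set \<Rightarrow> nat \<Rightarrow> bool" where
  "zchain I V k \<longleftrightarrow> (\<exists>Z :: nat \<Rightarrow> ('i \<Rightarrow> complex) set.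
     (\<forall>i\<le>k. zirreducible I (Z i) \<and> Z i \<subseteq> V) \<and> (\<forall>i<k. Z i \<subset> Z (Suc i)))"

definition has_zdim :: "'i set \<Rightarrow> ('i \<Rightarrow> complex) set \<Rightarrow> nat \<Rightarrow> bool" where
  "has_zdim I V d \<longleftrightarrow> zchain I V d \<and> \<not> zchain I V (Suc d)"

definition vupd :: "complex ^ 'n \<Rightarrow> 'n \<Rightarrow> complex \<Rightarrow> complex ^ 'n" where
  "vupd t k z = (\<chi> j. if j = k then z else t $ j)"

text \<open>Holomorphic on an open set: continuous and holomorphic in each variable (Osgood).\<close>
definition mholo_on :: "(complex ^ 'n) set \<Rightarrow> (complex ^ 'n \<Rightarrow> complex) \<Rightarrow> bool" where
  "mholo_on U f \<longleftrightarrow> open U \<and> continuous_on U f \<and>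
     (\<forall>t\<in>U. \<forall>k. (\<lambda>z. f (vupd t k z)) field_differentiable at (t $ k))"

definition mpderiv :: "(complex ^ 'n \<Rightarrow> complex) \<Rightarrow> 'n \<Rightarrow> complex ^ 'n \<Rightarrow> complex" where
  "mpderiv f k t = deriv (\<lambda>z. f (vupd t k z)) (t $ k)"

text \<open>Coordinates of C^(n+m): Inl k for t_k (k :: 'n, n = CARD('n)), Inr i for delta_(i+1), i < m.\<close>
definition tower_idx :: "nat \<Rightarrow> ('n + nat) set" where
  "tower_idx m = range Inl \<union> Inr ` {..<m}"

definition psi :: "nat \<Rightarrow> (nat \<Rightarrow> complex ^ 'n \<Rightarrow> complex) \<Rightarrow> complex ^ 'n \<Rightarrow> ('n + nat \<Rightarrow> complex)" where
  "psi m \<delta> t = (\<lambda>c. case c of Inl k \<Rightarrow> t $ k | Inr i \<Rightarrow> if i < m then \<delta> i t else 0)"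

text \<open>Coordinates of C^(n+m+r): Inl a for tower coordinates, Inr j for x_(j+1), j < r.\<close>
definition inc_idx :: "nat \<Rightarrow> nat \<Rightarrow> (('n + nat) + nat) set" where
  "inc_idx m r = Inl ` tower_idx m \<union> Inr ` {..<r}"

definition radpar_x :: "nat \<Rightarrow> (nat \<Rightarrow> complex ^ 'n \<Rightarrow> complex)
    \<Rightarrow> (nat \<Rightarrow> ('n + nat \<Rightarrow> complex) \<Rightarrow> complex) \<Rightarrow> (nat \<Rightarrow> ('n + nat \<Rightarrow> complex) \<Rightarrow> complex)
    \<Rightarrow> nat \<Rightarrow> complex ^ 'n \<Rightarrow> complex" where
  "radpar_x m \<delta> xN xD j t = xN j (psi m \<delta> t) / xD j (psi m \<delta> t)"

definition phi :: "nat \<Rightarrow> nat \<Rightarrow> (nat \<Rightarrow> complex ^ 'n \<Rightarrow> complex)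
    \<Rightarrow> (nat \<Rightarrow> ('n + nat \<Rightarrow> complex) \<Rightarrow> complex) \<Rightarrow> (nat \<Rightarrow> ('n + nat \<Rightarrow> complex) \<Rightarrow> complex)
    \<Rightarrow> complex ^ 'n \<Rightarrow> (('n + nat) + nat \<Rightarrow> complex)" where
  "phi m r \<delta> xN xD t = (\<lambda>c. case c of Inl a \<Rightarrow> psi m \<delta> t a
       | Inr j \<Rightarrow> if j < r then radpar_x m \<delta> xN xD j t else 0)"

definition pistar :: "(('n + nat) + nat \<Rightarrow> complex) \<Rightarrow> ('n + nat \<Rightarrow> complex)" where
  "pistar p = (\<lambda>a. p (Inl a))"

end

theory Submission
  imports Defs "HOL-Library.Function_Algebras" "HOL-Complex_Analysis.Complex_Analysis" "HOL-Computational_Algebra.Polynomial"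
begin

lemma zpoly_mono: "f \<in> zpoly X \<Longrightarrow> X \<subseteq> Y \<Longrightarrow> f \<in> zpoly Y"
  by (induction rule: zpoly.induct) (auto intro: zpoly.intros)

lemma zpoly_sum: "finite A \<Longrightarrow> (\<And>a. a \<in> A \<Longrightarrow> f a \<in> zpoly X) \<Longrightarrow> (\<lambda>p. \<Sum>a\<in>A. f a p) \<in> zpoly X"
proof (induction A rule: finite_induct)
  case empty then show ?case using zpoly_const[of 0] by simp
next
  case (insert x F) then show ?case using zpoly_add[of "f x" X "\<lambda>p. \<Sum>a\<in>F. f a p"] by simp
qed

lemma zpoly_prod: "finite A \<Longrightarrow> (\<And>a. a \<in> A \<Longrightarrow> f a \<in> zpoly X) \<Longrightarrow> (\<lambda>p. \<Prod>a\<in>A. f a p) \<in> zpoly X"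
proof (induction A rule: finite_induct)
  case empty then show ?case using zpoly_const[of 1] by simp
next
  case (insert x F) then show ?case using zpoly_mult[of "f x" X "\<lambda>p. \<Prod>a\<in>F. f a p"] by simp
qed

lemma zpoly_pow: "f \<in> zpoly X \<Longrightarrow> (\<lambda>p. f p ^ k) \<in> zpoly X"
proof (induction k)
  case 0 then show ?case using zpoly_const[of 1] by simp
next
  case (Suc k) then show ?case using zpoly_mult[of f X "\<lambda>p. f p ^ k"] by simp
qed

lemma zpoly_minus: "f \<in> zpoly X \<Longrightarrow> g \<in> zpoly X \<Longrightarrow> (\<lambda>p. f p - g p) \<in> zpoly X"
proof -
  assume a: "f \<in> zpoly X" "g \<in> zpoly X"
  from zpoly_add[OF a(1) zpoly_mult[OF zpoly_const[of "-1"] a(2)]]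
  show ?thesis by simp
qed

lemma zpoly_agree: "f \<in> zpoly X \<Longrightarrow> (\<And>i. i \<in> X \<Longrightarrow> p i = q i) \<Longrightarrow> f p = f q"
  by (induction f rule: zpoly.induct) auto

lemma zpoly_comp: "f \<in> zpoly X \<Longrightarrow> (\<And>i. i \<in> X \<Longrightarrow> g i \<in> zpoly Y) \<Longrightarrow> (\<lambda>p. f (\<lambda>i. g i p)) \<in> zpoly Y"
  by (induction f rule: zpoly.induct) (auto intro: zpoly.intros)

lemma zclosed_zero: "F \<subseteq> zpoly I \<Longrightarrow> zclosed I {p \<in> cspace I. \<forall>f\<in>F. f p = 0}"
  unfolding zclosed_def by blast

lemma zclosed_sub: "zclosed I S \<Longrightarrow> S \<subseteq> cspace I"
  unfolding zclosed_def by auto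

lemma zclosed_Inter:
  assumes "\<forall>S\<in>\<S>. zclosed I S"
  shows "zclosed I (\<Inter>\<S> \<inter> cspace I)"
proof -
  have "\<forall>S\<in>\<S>. \<exists>F. F \<subseteq> zpoly I \<and> S = {p \<in> cspace I. \<forall>f\<in>F. f p = 0}"
    using assms unfolding zclosed_def by simp
  from bchoice[OF this] obtain F where F0: "\<forall>S\<in>\<S>. F S \<subseteq> zpoly I \<and> S = {p \<in> cspace I. \<forall>f\<in>F S. f p = 0}"
    ..
  have "\<Inter>\<S> \<inter> cspace I = {p \<in> cspace I. \<forall>f\<in>(\<Union>S\<in>\<S>. F S). f p = 0}"
  proof (intro equalityI subsetI)
    fix p assume p: "p \<in> \<Inter>\<S> \<inter> cspace I"
    have "\<forall>S\<in>\<S>. \<forall>f\<in>F S. f p = 0"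
    proof (intro ballI)
      fix S f assume S: "S \<in> \<S>" and f: "f \<in> F S"
      have "p \<in> S" using p S by simp
      then have "p \<in> {p \<in> cspace I. \<forall>f\<in>F S. f p = 0}" using F0 S by simp
      then show "f p = 0" using f by simp
    qed
    then show "p \<in> {p \<in> cspace I. \<forall>f\<in>(\<Union>S\<in>\<S>. F S). f p = 0}" using p by simp
  next
    fix p assume p: "p \<in> {p \<in> cspace I. \<forall>f\<in>(\<Union>S\<in>\<S>. F S). f p = 0}"
    have "p \<in> S" if S: "S \<in> \<S>" for S
    proof -
      have "p \<in> {p \<in> cspace I. \<forall>f\<in>F S. f p = 0}" using p S by simp
      then show ?thesis using F0 S by simp
    qed
    then show "p \<in> \<Inter>\<S> \<inter> cspace I" using p by simp
  qed
  moreover have "(\<Union>S\<in>\<S>. F S) \<subseteq> zpoly I" using F0 by auto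
  ultimately show ?thesis unfolding zclosed_def by (intro exI conjI)
qed

lemma zclosed_cspace: "zclosed I (cspace I)"
  using zclosed_zero[of "{}" I] by simp

lemma zclosure_closed: assumes "A \<subseteq> cspace I" shows "zclosed I (zclosure I A)"
proof -
  have m: "cspace I \<in> {S. zclosed I S \<and> A \<subseteq> S}" using zclosed_cspace assms by blast
  have "zclosure I A = \<Inter>{S. zclosed I S \<and> A \<subseteq> S} \<inter> cspace I"
    unfolding zclosure_def using Inter_lower[OF m] by blast
  moreover have "zclosed I (\<Inter>{S. zclosed I S \<and> A \<subseteq> S} \<inter> cspace I)"
    by (rule zclosed_Inter) blast
  ultimately show ?thesis by simp
qed

text \<open>Note: if A is not inside cspace I the closure is UNIV, which is not closed; handle.\<close>

lemma zclosure_sup: "A \<subseteq> zclosure I A"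
  unfolding zclosure_def by blast

lemma zclosure_min: "zclosed I S \<Longrightarrow> A \<subseteq> S \<Longrightarrow> zclosure I A \<subseteq> S"
  unfolding zclosure_def by blast

lemma zclosure_mono: "A \<subseteq> B \<Longrightarrow> zclosure I A \<subseteq> zclosure I B"
  unfolding zclosure_def by blast

lemma zclosure_vanish:
  assumes "A \<subseteq> cspace I" "g \<in> zpoly I" "\<forall>p\<in>A. g p = 0" "p \<in> zclosure I A"
  shows "g p = 0"
proof -
  have "zclosure I A \<subseteq> {p \<in> cspace I. \<forall>f\<in>{g}. f p = 0}"
    by (rule zclosure_min) (use assms zclosed_zero[of "{g}" I] in auto)
  then show ?thesis using assms by auto
qed

lemma zclosure_idem: "zclosed I S \<Longrightarrow> zclosure I S = S"
  using zclosure_min zclosure_sup by blast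

definition zdom :: "'i set \<Rightarrow> ('i \<Rightarrow> complex) set \<Rightarrow> bool" where
  "zdom I A \<longleftrightarrow> (\<forall>g h. g \<in> zpoly I \<longrightarrow> h \<in> zpoly I \<longrightarrow> (\<forall>p\<in>A. g p * h p = 0) \<longrightarrow>
      (\<forall>p\<in>A. g p = 0) \<or> (\<forall>p\<in>A. h p = 0))"

lemma zirr_dom: assumes "zirreducible I Z" shows "zdom I Z"
  unfolding zdom_def
proof (intro allI impI)
  fix g h assume g: "g \<in> zpoly I" and h: "h \<in> zpoly I" and gh: "\<forall>p\<in>Z. g p * h p = 0"
  have Zc: "Z \<subseteq> cspace I" using assms zclosed_sub unfolding zirreducible_def by blast
  have "Z \<subseteq> {p \<in> cspace I. \<forall>f\<in>{g}. f p = 0} \<union> {p \<in> cspace I. \<forall>f\<in>{h}. f p = 0}"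
    using gh Zc by auto
  moreover have "zclosed I {p \<in> cspace I. \<forall>f\<in>{g}. f p = 0}" "zclosed I {p \<in> cspace I. \<forall>f\<in>{h}. f p = 0}"
    using zclosed_zero[of "{g}" I] zclosed_zero[of "{h}" I] g h by auto
  ultimately show "(\<forall>p\<in>Z. g p = 0) \<or> (\<forall>p\<in>Z. h p = 0)"
    using assms unfolding zirreducible_def by blast
qed

lemma dom_irr:
  assumes "A \<subseteq> cspace I" "A \<noteq> {}" "zdom I A"
  shows "zirreducible I (zclosure I A)"
  unfolding zirreducible_def
proof (intro conjI allI impI)
  show "zclosed I (zclosure I A)" by (rule zclosure_closed[OF assms(1)])
  show "zclosure I A \<noteq> {}" using assms(2) zclosure_sup by blast
  fix S1 S2 assume H: "zclosed I S1 \<and> zclosed I S2 \<and> zclosure I A \<subseteq> S1 \<union> S2"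
  show "zclosure I A \<subseteq> S1 \<or> zclosure I A \<subseteq> S2"
  proof (rule ccontr)
    assume nn: "\<not> (zclosure I A \<subseteq> S1 \<or> zclosure I A \<subseteq> S2)"
    obtain F1 where F1: "F1 \<subseteq> zpoly I" "S1 = {p \<in> cspace I. \<forall>f\<in>F1. f p = 0}"
      using H unfolding zclosed_def by blast
    obtain F2 where F2: "F2 \<subseteq> zpoly I" "S2 = {p \<in> cspace I. \<forall>f\<in>F2. f p = 0}"
      using H unfolding zclosed_def by blast
    have "\<not> A \<subseteq> S1" using nn zclosure_min[of I S1 A] H by meson
    then obtain f1 p1 where f1: "f1 \<in> F1" "p1 \<in> A" "f1 p1 \<noteq> 0" using F1(2) assms(1) by auto
    have "\<not> A \<subseteq> S2" using nn zclosure_min[of I S2 A] H by meson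
    then obtain f2 p2 where f2: "f2 \<in> F2" "p2 \<in> A" "f2 p2 \<noteq> 0" using F2(2) assms(1) by auto
    have AS: "A \<subseteq> S1 \<union> S2" using H zclosure_sup[of A I] by (meson subset_trans)
    have "\<forall>p\<in>A. f1 p * f2 p = 0"
    proof
      fix p assume "p \<in> A"
      then have "p \<in> S1 \<or> p \<in> S2" using AS by blast
      then show "f1 p * f2 p = 0" using F1 F2 f1 f2 by auto
    qed
    moreover have "f1 \<in> zpoly I" "f2 \<in> zpoly I" using f1 f2 F1 F2 by auto
    ultimately have "(\<forall>p\<in>A. f1 p = 0) \<or> (\<forall>p\<in>A. f2 p = 0)" using assms(3) unfolding zdom_def by blast
    then show False using f1 f2 by blast
  qed
qed


definition sh :: "(complex ^ 'n) set \<Rightarrow> (complex ^ 'n \<Rightarrow> complex) \<Rightarrow> bool" where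
  "sh U F \<longleftrightarrow> continuous_on U F \<and> (\<forall>t\<in>U. \<forall>k. (\<lambda>z. F (vupd t k z)) field_differentiable at (t $ k))"

lemma vupd_nth [simp]: "vupd t k z $ j = (if j = k then z else t $ j)"
  unfolding vupd_def by simp

lemma vupd_same [simp]: "vupd t k (t $ k) = t"
  by (simp add: vec_eq_iff)

lemma vupd_vupd [simp]: "vupd (vupd t k z) k w = vupd t k w"
  by (simp add: vec_eq_iff)

lemma sh_const: "sh U (\<lambda>_. c)"
  unfolding sh_def by auto

lemma sh_coord: "sh U (\<lambda>t. t $ j)"
  unfolding sh_def
proof (intro conjI ballI allI)
  show "continuous_on U (\<lambda>t. t $ j)"
    by (intro continuous_intros)
  fix t :: "complex ^ 'a" and k
  show "(\<lambda>z. vupd t k z $ j) field_differentiable at (t $ k)"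
  proof (cases "j = k")
    case True then show ?thesis by (simp add: field_differentiable_ident)
  next
    case False then show ?thesis by (simp add: field_differentiable_const)
  qed
qed

lemma sh_add: "sh U F \<Longrightarrow> sh U G \<Longrightarrow> sh U (\<lambda>t. F t + G t)"
  unfolding sh_def by (auto intro!: continuous_intros field_differentiable_add)

lemma sh_mult: "sh U F \<Longrightarrow> sh U G \<Longrightarrow> sh U (\<lambda>t. F t * G t)"
  unfolding sh_def by (auto intro!: continuous_intros field_differentiable_mult)

lemma sh_zpoly: "f \<in> zpoly X \<Longrightarrow> (\<And>c. c \<in> X \<Longrightarrow> sh U (\<lambda>t. \<phi> t c)) \<Longrightarrow> sh U (\<lambda>t. f (\<phi> t))"
proof (induction rule: zpoly.induct)
  case (zpoly_const c) show ?case by (rule sh_const)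
next
  case (zpoly_var i) then show ?case by simp
next
  case (zpoly_add f g) then show ?case using sh_add[of U "\<lambda>t. f (\<phi> t)" "\<lambda>t. g (\<phi> t)"] by simp
next
  case (zpoly_mult f g) then show ?case using sh_mult[of U "\<lambda>t. f (\<phi> t)" "\<lambda>t. g (\<phi> t)"] by simp
qed

lemma dist_le_sum_cart: "dist (x :: complex ^ 'n) y \<le> (\<Sum>i\<in>UNIV. dist (x $ i) (y $ i))"
  unfolding dist_norm norm_vec_def
  by (rule order_trans[OF L2_set_le_sum]) (auto)

definition PD :: "complex ^ 'n \<Rightarrow> real \<Rightarrow> (complex ^ 'n) set" where
  "PD a r = {t. \<forall>j. dist (a $ j) (t $ j) < r}"

definition WS :: "complex ^ 'n \<Rightarrow> real \<Rightarrow> complex ^ 'n \<Rightarrow> 'n set \<Rightarrow> (complex ^ 'n) set" where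
  "WS a r c J = {t. \<forall>j. (j \<in> J \<longrightarrow> dist (a $ j) (t $ j) < r) \<and> (j \<notin> J \<longrightarrow> t $ j = c $ j)}"

lemma WS_PD: "c \<in> PD a r \<Longrightarrow> WS a r c J \<subseteq> PD a r"
  unfolding WS_def PD_def by (auto, metis)

lemma ball_PD: "ball a r \<subseteq> PD a r"
  unfolding PD_def ball_def using dist_vec_nth_le le_less_trans by blast

lemma PD_ball:
  assumes "r > 0"
  shows "PD a (r / real CARD('n)) \<subseteq> ball (a :: complex ^ 'n) r"
proof
  fix t assume "t \<in> PD a (r / real CARD('n))"
  then have d: "\<And>j. dist (a $ j) (t $ j) < r / real CARD('n)" unfolding PD_def by auto
  have "dist a t \<le> (\<Sum>i\<in>UNIV. dist (a $ i) (t $ i))" by (rule dist_le_sum_cart)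
  also have "\<dots> < (\<Sum>i\<in>(UNIV::'n set). r / real CARD('n))"
    by (rule sum_strict_mono) (use d in auto)
  also have "\<dots> = r" by simp
  finally show "t \<in> ball a r" by simp
qed

lemma ID_lemma:
  fixes F :: "complex ^ 'n \<Rightarrow> complex"
  assumes PDU: "PD a r \<subseteq> U"
    and diff: "\<forall>t\<in>U. \<forall>k. (\<lambda>z. F (vupd t k z)) field_differentiable at (t $ k)"
  shows "finite J \<Longrightarrow> \<forall>c\<in>PD a r. \<forall>b\<in>WS a r c J. \<forall>\<rho>>0.
     (\<forall>t\<in>WS a r c J. (\<forall>j\<in>J. dist (b $ j) (t $ j) < \<rho>) \<longrightarrow> F t = 0) \<longrightarrow> (\<forall>t\<in>WS a r c J. F t = 0)"
proof (induction J rule: finite_induct)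
  case empty
  show ?case
  proof (intro ballI allI impI)
    fix c b \<rho> t assume "c \<in> PD a r" "b \<in> WS a r c {}" "\<rho> > (0::real)"
      and H: "\<forall>t\<in>WS a r c {}. (\<forall>j\<in>{}. dist (b $ j) (t $ j) < \<rho>) \<longrightarrow> F t = 0"
      and t: "t \<in> WS a r c {}"
    show "F t = 0" using H t by auto
  qed
next
  case (insert j J)
  show ?case
  proof (intro ballI allI impI)
    fix c b \<rho> t assume c: "c \<in> PD a r" and b: "b \<in> WS a r c (insert j J)" and \<rho>: "\<rho> > (0::real)"
      and H: "\<forall>t\<in>WS a r c (insert j J). (\<forall>i\<in>insert j J. dist (b $ i) (t $ i) < \<rho>) \<longrightarrow> F t = 0"
      and t: "t \<in> WS a r c (insert j J)"
    have slice: "\<forall>t'\<in>WS a r (vupd c j s) J. F t' = 0"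
      if s: "dist (a $ j) s < r" "dist (b $ j) s < \<rho>" for s
    proof -
      have cs: "vupd c j s \<in> PD a r" using c s unfolding PD_def by auto
      have bs: "vupd b j s \<in> WS a r (vupd c j s) J"
        using b s insert.hyps(2) unfolding WS_def by auto
      have Hs: "\<forall>t'\<in>WS a r (vupd c j s) J. (\<forall>i\<in>J. dist (vupd b j s $ i) (t' $ i) < \<rho>) \<longrightarrow> F t' = 0"
      proof (intro ballI impI)
        fix t' assume t': "t' \<in> WS a r (vupd c j s) J" and d: "\<forall>i\<in>J. dist (vupd b j s $ i) (t' $ i) < \<rho>"
        have "t' \<in> WS a r c (insert j J)" using t' s insert.hyps(2) unfolding WS_def by auto
        moreover have "\<forall>i\<in>insert j J. dist (b $ i) (t' $ i) < \<rho>"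
        proof
          fix i assume "i \<in> insert j J"
          then show "dist (b $ i) (t' $ i) < \<rho>"
          proof
            assume "i = j"
            then have "t' $ i = s" using t' insert.hyps(2) unfolding WS_def by auto
            then show ?thesis using s \<open>i = j\<close> by simp
          next
            assume "i \<in> J"
            then show ?thesis using d insert.hyps(2) by (metis vupd_nth)
          qed
        qed
        ultimately show "F t' = 0" using H by blast
      qed
      show ?thesis using insert.IH cs bs \<rho> Hs by blast
    qed
    have tPD: "t \<in> PD a r" using WS_PD[OF c] t by blast
    define g where "g = (\<lambda>z. F (vupd t j z))"
    have hol: "g holomorphic_on ball (a $ j) r"
      unfolding holomorphic_on_def
    proof
      fix z assume z: "z \<in> ball (a $ j) r"
      have "vupd t j z \<in> PD a r" using tPD z unfolding PD_def by auto
      then have "vupd t j z \<in> U" using PDU by blast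
      then have "(\<lambda>w. F (vupd (vupd t j z) j w)) field_differentiable at (vupd t j z $ j)"
        using diff by blast
      then have "g field_differentiable at z" unfolding g_def by simp
      then show "g field_differentiable at z within ball (a $ j) r"
        by (rule field_differentiable_at_within)
    qed
    have bj: "b $ j \<in> ball (a $ j) r" using b unfolding WS_def by auto
    have "g (t $ j) = 0"
    proof (rule analytic_continuation[OF hol])
      show "open (ball (a $ j) r)" by simp
      show "connected (ball (a $ j) r)" by simp
      show "ball (a $ j) r \<inter> ball (b $ j) \<rho> \<subseteq> ball (a $ j) r" by blast
      show "b $ j \<in> ball (a $ j) r" by (rule bj)
      show "b $ j islimpt ball (a $ j) r \<inter> ball (b $ j) \<rho>"
        by (rule open_imp_islimpt) (use bj \<rho> in auto)
      show "t $ j \<in> ball (a $ j) r" using t unfolding WS_def by auto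
      fix z assume z: "z \<in> ball (a $ j) r \<inter> ball (b $ j) \<rho>"
      have "vupd t j z \<in> WS a r (vupd c j z) J"
        using t z insert.hyps(2) unfolding WS_def by auto
      then show "g z = 0" unfolding g_def using slice[of z] z by auto
    qed
    then show "F t = 0" unfolding g_def by simp
  qed
qed


lemma PD_sub_open:
  assumes "open U" "t \<in> U"
  obtains r where "r > 0" "PD t r \<subseteq> U"
proof -
  obtain e where e: "e > 0" "ball t e \<subseteq> U" using assms open_contains_ball by blast
  have "PD t (e / real CARD('a)) \<subseteq> U" using PD_ball[OF e(1), of t] e(2) by blast
  moreover have "e / real CARD('a) > 0" using e(1) by simp
  ultimately show ?thesis using that by blast
qed

lemma WS_UNIV: "WS a r c UNIV = PD a r"
  unfolding WS_def PD_def by auto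

lemma zero_near_PD:
  fixes F :: "complex ^ 'n \<Rightarrow> complex"
  assumes PDU: "PD a r \<subseteq> U"
    and diff: "\<forall>t\<in>U. \<forall>k. (\<lambda>z. F (vupd t k z)) field_differentiable at (t $ k)"
    and b: "b \<in> PD a r" and e: "e > 0" and Z: "\<forall>s\<in>ball b e. F s = 0"
    and r: "r > 0"
  shows "\<forall>t\<in>PD a r. F t = 0"
proof -
  have aPD: "a \<in> PD a r" using r unfolding PD_def by simp
  have I: "\<forall>c\<in>PD a r. \<forall>b\<in>WS a r c UNIV. \<forall>\<rho>>0.
     (\<forall>t\<in>WS a r c UNIV. (\<forall>j\<in>UNIV. dist (b $ j) (t $ j) < \<rho>) \<longrightarrow> F t = 0) \<longrightarrow> (\<forall>t\<in>WS a r c UNIV. F t = 0)"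
    by (rule ID_lemma[OF PDU diff]) simp
  have "\<forall>t\<in>PD a r. (\<forall>j. dist (b $ j) (t $ j) < e / real CARD('n)) \<longrightarrow> F t = 0"
  proof (intro ballI impI)
    fix t assume "\<forall>j. dist (b $ j) (t $ j) < e / real CARD('n)"
    then have "t \<in> PD b (e / real CARD('n))" unfolding PD_def by simp
    then have "t \<in> ball b e" using PD_ball[OF e] by blast
    then show "F t = 0" using Z by blast
  qed
  moreover have "e / real CARD('n) > 0" using e by simp
  ultimately show ?thesis using I aPD b unfolding WS_UNIV by blast
qed

lemma identity_U:
  fixes F :: "complex ^ 'n \<Rightarrow> complex"
  assumes U: "open U" "connected U"
    and diff: "\<forall>t\<in>U. \<forall>k. (\<lambda>z. F (vupd t k z)) field_differentiable at (t $ k)"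
    and b: "b \<in> U" and e: "e > 0" and Z: "\<forall>s\<in>ball b e. F s = 0"
  shows "\<forall>t\<in>U. F t = 0"
proof -
  define N where "N = {t\<in>U. \<exists>e>0. \<forall>s\<in>ball t e. F s = 0}"
  have op: "openin (top_of_set U) N"
  proof -
    have "open N"
      unfolding open_contains_ball
    proof
      fix t assume "t \<in> N"
      then obtain e where e: "e > 0" "\<forall>s\<in>ball t e. F s = 0" and tU: "t \<in> U" unfolding N_def by blast
      obtain e2 where e2: "e2 > 0" "ball t e2 \<subseteq> U" using U(1) tU open_contains_ball by blast
      have "ball t (min e e2) \<subseteq> N"
      proof
        fix s assume s: "s \<in> ball t (min e e2)"
        have "ball s (min e e2 - dist t s) \<subseteq> ball t e"
        proof
          fix x assume "x \<in> ball s (min e e2 - dist t s)"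
          then have "dist s x < min e e2 - dist t s" by simp
          moreover have "dist t x \<le> dist t s + dist s x" by (rule dist_triangle)
          ultimately show "x \<in> ball t e" by simp
        qed
        moreover have "min e e2 - dist t s > 0" using s by simp
        moreover have "s \<in> U" using s e2 by auto
        ultimately show "s \<in> N" unfolding N_def using e by blast
      qed
      then show "\<exists>e>0. ball t e \<subseteq> N" using e e2 by (intro exI[of _ "min e e2"]) auto
    qed
    moreover have "N \<subseteq> U" unfolding N_def by blast
    ultimately show ?thesis by (simp add: openin_open_eq U(1))
  qed
  have cl: "closedin (top_of_set U) N"
    unfolding closedin_limpt
  proof (intro conjI allI impI)
    show "N \<subseteq> U" unfolding N_def by blast
    fix t assume H: "t islimpt N \<and> t \<in> U"
    obtain r where r: "r > 0" "PD t r \<subseteq> U" using PD_sub_open U(1) H by blast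
    obtain t' where t': "t' \<in> N" "t' \<noteq> t" "dist t' t < r" using H r(1) islimpt_approachable by blast
    have t'PD: "t' \<in> PD t r" using ball_PD[of t r] t'(3) by (auto simp: dist_commute)
    obtain e' where e': "e' > 0" "\<forall>s\<in>ball t' e'. F s = 0" using t'(1) unfolding N_def by blast
    have "\<forall>s\<in>PD t r. F s = 0" by (rule zero_near_PD[OF r(2) diff t'PD e' r(1)])
    then have "\<forall>s\<in>ball t r. F s = 0" using ball_PD by blast
    then show "t \<in> N" unfolding N_def using H r(1) by blast
  qed
  have "b \<in> N" unfolding N_def using b e Z by blast
  then have NU: "N = U" using U(2) op cl unfolding connected_clopen by blast
  show ?thesis
  proof
    fix t assume "t \<in> U"
    then have "t \<in> N" using NU by simp
    then obtain e where "e > 0" "\<forall>s\<in>ball t e. F s = 0" unfolding N_def by blast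
    then show "F t = 0" by simp
  qed
qed

lemma dom_U:
  fixes F G :: "complex ^ 'n \<Rightarrow> complex"
  assumes U: "open U" "connected U" and F: "sh U F" and G: "sh U G"
    and FG: "\<forall>t\<in>U. F t * G t = 0"
  shows "(\<forall>t\<in>U. F t = 0) \<or> (\<forall>t\<in>U. G t = 0)"
proof (rule ccontr)
  assume "\<not> ?thesis"
  then obtain b where b: "b \<in> U" "F b \<noteq> 0" and "\<exists>t\<in>U. G t \<noteq> 0" by blast
  have "continuous (at b) F" using F U(1) b(1) unfolding sh_def
    using continuous_on_eq_continuous_at by blast
  then obtain e where e: "e > 0" "\<forall>y. dist b y < e \<longrightarrow> F y \<noteq> 0" using continuous_at_avoid b(2) by blast
  obtain e2 where e2: "e2 > 0" "ball b e2 \<subseteq> U" using U(1) b(1) open_contains_ball by blast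
  have "\<forall>s\<in>ball b (min e e2). G s = 0"
  proof
    fix s assume s: "s \<in> ball b (min e e2)"
    then have "s \<in> U" "F s \<noteq> 0" using e e2 by auto
    then show "G s = 0" using FG by auto
  qed
  then have "\<forall>t\<in>U. G t = 0"
    by (intro identity_U[OF U _ b(1)]) (use G e e2 in \<open>auto simp: sh_def\<close>)
  then show False using \<open>\<exists>t\<in>U. G t \<noteq> 0\<close> by blast
qed

lemma dom_W:
  fixes F G :: "complex ^ 'n \<Rightarrow> complex"
  assumes U: "open U" and PDU: "PD a r \<subseteq> U" and r: "r > 0" and F: "sh U F" and G: "sh U G"
    and FG: "\<forall>t\<in>WS a r a J. F t * G t = 0"
  shows "(\<forall>t\<in>WS a r a J. F t = 0) \<or> (\<forall>t\<in>WS a r a J. G t = 0)"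
proof (rule ccontr)
  assume "\<not> ?thesis"
  then obtain b where b: "b \<in> WS a r a J" "F b \<noteq> 0" and "\<exists>t\<in>WS a r a J. G t \<noteq> 0" by blast
  have aPD: "a \<in> PD a r" using r unfolding PD_def by simp
  have bU: "b \<in> U" using WS_PD[OF aPD] b(1) PDU by blast
  have "continuous (at b) F" using F U(1) bU unfolding sh_def
    using continuous_on_eq_continuous_at by blast
  then obtain e where e: "e > 0" "\<forall>y. dist b y < e \<longrightarrow> F y \<noteq> 0" using continuous_at_avoid b(2) by blast
  have I: "\<forall>c\<in>PD a r. \<forall>b\<in>WS a r c J. \<forall>\<rho>>0.
     (\<forall>t\<in>WS a r c J. (\<forall>j\<in>J. dist (b $ j) (t $ j) < \<rho>) \<longrightarrow> G t = 0) \<longrightarrow> (\<forall>t\<in>WS a r c J. G t = 0)"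
    by (rule ID_lemma[OF PDU]) (use G in \<open>auto simp: sh_def\<close>)
  have H: "\<forall>t\<in>WS a r a J. (\<forall>j\<in>J. dist (b $ j) (t $ j) < e / real CARD('n)) \<longrightarrow> G t = 0"
  proof (intro ballI impI)
    fix t assume t: "t \<in> WS a r a J" and d: "\<forall>j\<in>J. dist (b $ j) (t $ j) < e / real CARD('n)"
    have "\<forall>j. dist (b $ j) (t $ j) < e / real CARD('n)"
    proof
      fix j show "dist (b $ j) (t $ j) < e / real CARD('n)"
      proof (cases "j \<in> J")
        case True then show ?thesis using d by blast
      next
        case False then have "b $ j = t $ j" using t b(1) unfolding WS_def by auto
        then show ?thesis using e(1) by simp
      qed
    qed
    then have "t \<in> ball b e" using PD_ball[OF e(1), of b] unfolding PD_def by blast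
    then have "F t \<noteq> 0" using e by simp
    then show "G t = 0" using FG t by auto
  qed
  have ep: "e / real CARD('n) > 0" using e(1) by simp
  have "\<forall>t\<in>WS a r a J. G t = 0" using I aPD b(1) H ep by blast
  then show False using \<open>\<exists>t\<in>WS a r a J. G t \<noteq> 0\<close> by blast
qed


lemma sum_fun_apply: "(sum f A) x = (\<Sum>a\<in>A. f a x)"
  by (induction A rule: infinite_finite_induct) auto

lemma prod_fun_apply: "(prod f A) x = (\<Prod>a\<in>A. f a x)"
  by (induction A rule: infinite_finite_induct) auto

definition sc :: "complex \<Rightarrow> ('x \<Rightarrow> complex) \<Rightarrow> ('x \<Rightarrow> complex)" where
  "sc c f = (\<lambda>x. c * f x)"

lemma sc_apply [simp]: "sc c f x = c * f x" by (simp add: sc_def)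

interpretation fvs: vector_space "sc :: complex \<Rightarrow> ('x \<Rightarrow> complex) \<Rightarrow> ('x \<Rightarrow> complex)"
  by unfold_locales (simp_all add: fun_eq_iff algebra_simps)

definition mono :: "'i set \<Rightarrow> ('i \<Rightarrow> nat) \<Rightarrow> ('i \<Rightarrow> complex) \<Rightarrow> complex" where
  "mono S b = (\<lambda>p. \<Prod>s\<in>S. p s ^ b s)"

definition MB :: "'i set \<Rightarrow> nat \<Rightarrow> (('i \<Rightarrow> complex) \<Rightarrow> complex) set" where
  "MB S B = mono S ` (PiE S (\<lambda>_. {..B}))"

definition rz :: "('i \<Rightarrow> complex) set \<Rightarrow> (('i \<Rightarrow> complex) \<Rightarrow> complex) \<Rightarrow> (('i \<Rightarrow> complex) \<Rightarrow> complex)" where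
  "rz Z f = (\<lambda>p. if p \<in> Z then f p else 0)"

definition gens :: "('i \<Rightarrow> complex) set \<Rightarrow> 'i set \<Rightarrow> nat \<Rightarrow> (('i \<Rightarrow> complex) \<Rightarrow> complex) set
     \<Rightarrow> (('i \<Rightarrow> complex) \<Rightarrow> complex) set" where
  "gens Z S B G = (\<lambda>(m, g). rz Z (\<lambda>p. m p * g p)) ` (MB S B \<times> G)"

definition Sp where "Sp Z S B G = fvs.span (gens Z S B G)"

definition gmul :: "(('i \<Rightarrow> complex) \<Rightarrow> complex) set \<Rightarrow> (('i \<Rightarrow> complex) \<Rightarrow> complex) set \<Rightarrow> (('i \<Rightarrow> complex) \<Rightarrow> complex) set" where
  "gmul G1 G2 = (\<lambda>(g1, g2). (\<lambda>p. g1 p * g2 p)) ` (G1 \<times> G2)"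

lemma finite_MB: "finite S \<Longrightarrow> finite (MB S B)"
  unfolding MB_def by (auto intro!: finite_PiE)

lemma card_MB: "finite S \<Longrightarrow> card (MB S B) \<le> (B + 1) ^ card S"
proof -
  assume S: "finite S"
  have "card (MB S B) \<le> card (PiE S (\<lambda>_. {..B}))" unfolding MB_def by (rule card_image_le) (use S in \<open>auto intro!: finite_PiE\<close>)
  also have "\<dots> = (B + 1) ^ card S" using S by (simp add: card_PiE)
  finally show ?thesis .
qed

lemma finite_gens: "finite S \<Longrightarrow> finite G \<Longrightarrow> finite (gens Z S B G)"
  unfolding gens_def using finite_MB by auto

lemma card_gens: "finite S \<Longrightarrow> finite G \<Longrightarrow> card (gens Z S B G) \<le> (B + 1) ^ card S * card G"
proof -
  assume S: "finite S" and G: "finite G"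
  have "card (gens Z S B G) \<le> card (MB S B \<times> G)" unfolding gens_def
    by (rule card_image_le) (use S G finite_MB in auto)
  also have "\<dots> = card (MB S B) * card G" by (simp add: card_cartesian_product)
  also have "\<dots> \<le> (B + 1) ^ card S * card G" using card_MB[OF S] by simp
  finally show ?thesis .
qed

lemma MB_mono: "B \<le> B' \<Longrightarrow> MB S B \<subseteq> MB S B'"
  unfolding MB_def by (rule image_mono) (auto simp: PiE_def Pi_def)

lemma Sp_mono: "B \<le> B' \<Longrightarrow> G \<subseteq> G' \<Longrightarrow> Sp Z S B G \<subseteq> Sp Z S B' G'"
  unfolding Sp_def gens_def
  by (rule fvs.span_mono) (use MB_mono in blast)

lemma mono_mult:
  assumes "b1 \<in> PiE S (\<lambda>_. {..B1})" "b2 \<in> PiE S (\<lambda>_. {..B2})"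
  shows "(\<lambda>p. mono S b1 p * mono S b2 p) = mono S (restrict (\<lambda>s. b1 s + b2 s) S)"
    "restrict (\<lambda>s. b1 s + b2 s) S \<in> PiE S (\<lambda>_. {..B1 + B2})"
proof -
  have "mono S b1 p * mono S b2 p = mono S (restrict (\<lambda>s. b1 s + b2 s) S) p" for p
  proof -
    have "mono S b1 p * mono S b2 p = (\<Prod>s\<in>S. p s ^ b1 s * p s ^ b2 s)"
      unfolding mono_def by (rule prod.distrib[symmetric])
    also have "\<dots> = mono S (restrict (\<lambda>s. b1 s + b2 s) S) p"
      unfolding mono_def by (rule prod.cong) (simp_all add: power_add)
    finally show ?thesis .
  qed
  then show "(\<lambda>p. mono S b1 p * mono S b2 p) = mono S (restrict (\<lambda>s. b1 s + b2 s) S)" by auto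
  show "restrict (\<lambda>s. b1 s + b2 s) S \<in> PiE S (\<lambda>_. {..B1 + B2})"
    using assms by (auto simp: PiE_def Pi_def add_mono)
qed

lemma MB_mult: "m1 \<in> MB S B1 \<Longrightarrow> m2 \<in> MB S B2 \<Longrightarrow> (\<lambda>p. m1 p * m2 p) \<in> MB S (B1 + B2)"
proof -
  assume "m1 \<in> MB S B1" "m2 \<in> MB S B2"
  then obtain b1 b2 where b: "b1 \<in> PiE S (\<lambda>_. {..B1})" "m1 = mono S b1" "b2 \<in> PiE S (\<lambda>_. {..B2})" "m2 = mono S b2"
    unfolding MB_def by blast
  have "(\<lambda>p. m1 p * m2 p) = mono S (restrict (\<lambda>s. b1 s + b2 s) S)" using mono_mult(1)[OF b(1,3)] b by simp
  moreover have "restrict (\<lambda>s. b1 s + b2 s) S \<in> PiE S (\<lambda>_. {..B1 + B2})" by (rule mono_mult(2)[OF b(1,3)])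
  ultimately show ?thesis unfolding MB_def by (rule image_eqI)
qed

lemma gens_mult:
  assumes "a \<in> gens Z S B1 G1" "b \<in> gens Z S B2 G2"
  shows "a * b \<in> gens Z S (B1 + B2) (gmul G1 G2)"
proof -
  obtain m1 g1 where 1: "m1 \<in> MB S B1" "g1 \<in> G1" "a = rz Z (\<lambda>p. m1 p * g1 p)" using assms(1) unfolding gens_def by auto
  obtain m2 g2 where 2: "m2 \<in> MB S B2" "g2 \<in> G2" "b = rz Z (\<lambda>p. m2 p * g2 p)" using assms(2) unfolding gens_def by auto
  have "a * b = rz Z (\<lambda>p. (\<lambda>p. m1 p * m2 p) p * (\<lambda>p. g1 p * g2 p) p)"
    using 1 2 by (auto simp: rz_def fun_eq_iff)
  moreover have "(\<lambda>p. m1 p * m2 p) \<in> MB S (B1 + B2)" using MB_mult 1 2 by blast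
  moreover have "(\<lambda>p. g1 p * g2 p) \<in> gmul G1 G2" using 1 2 unfolding gmul_def by auto
  ultimately show ?thesis unfolding gens_def by auto
qed

lemma span_mult:
  fixes A B C :: "('x \<Rightarrow> complex) set"
  assumes "\<And>a b. a \<in> A \<Longrightarrow> b \<in> B \<Longrightarrow> a * b \<in> C"
    and u: "u \<in> fvs.span A" and v: "v \<in> fvs.span B"
  shows "u * v \<in> fvs.span C"
proof -
  obtain T1 r1 where T1: "finite T1" "T1 \<subseteq> A" "u = (\<Sum>a\<in>T1. sc (r1 a) a)"
    using u unfolding fvs.span_explicit by blast
  obtain T2 r2 where T2: "finite T2" "T2 \<subseteq> B" "v = (\<Sum>a\<in>T2. sc (r2 a) a)"
    using v unfolding fvs.span_explicit by blast
  have "u * v = (\<Sum>a\<in>T1. \<Sum>b\<in>T2. sc (r1 a) a * sc (r2 b) b)"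
    unfolding T1(3) T2(3) by (rule sum_product)
  also have "\<dots> = (\<Sum>a\<in>T1. \<Sum>b\<in>T2. sc (r1 a * r2 b) (a * b))"
    by (intro sum.cong refl) (simp add: fun_eq_iff)
  also have "\<dots> \<in> fvs.span C"
    by (intro fvs.span_sum fvs.span_scale fvs.span_base assms(1)) (use T1 T2 in auto)
  finally show ?thesis .
qed

lemma Sp_mult: "u \<in> Sp Z S B1 G1 \<Longrightarrow> v \<in> Sp Z S B2 G2 \<Longrightarrow> u * v \<in> Sp Z S (B1 + B2) (gmul G1 G2)"
  unfolding Sp_def by (rule span_mult[OF gens_mult])

lemma rz_mult: "rz Z (\<lambda>p. f p * g p) = rz Z f * rz Z g"
  by (auto simp: rz_def fun_eq_iff)

lemma rz_add: "rz Z (\<lambda>p. f p + g p) = rz Z f + rz Z g"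
  by (auto simp: rz_def fun_eq_iff)

lemma rz_sc: "rz Z (\<lambda>p. c * f p) = sc c (rz Z f)"
  by (auto simp: rz_def fun_eq_iff)

lemma rz_sum: "rz Z (\<lambda>p. \<Sum>a\<in>A. f a p) = (\<Sum>a\<in>A. rz Z (f a))"
  by (auto simp: rz_def fun_eq_iff sum_fun_apply)

lemma gmul_one: "gmul {\<lambda>_. 1} G = G" "gmul G {\<lambda>_. 1} = G"
  unfolding gmul_def by (auto simp: image_iff)

lemma mono_zero: "(\<lambda>_. 1) \<in> MB S B"
proof -
  have "restrict (\<lambda>_. 0) S \<in> PiE S (\<lambda>_. {..B})" by auto
  moreover have "mono S (restrict (\<lambda>_. 0) S) = (\<lambda>_. 1)" unfolding mono_def by auto
  ultimately show ?thesis unfolding MB_def by (metis image_eqI)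
qed

lemma Sp_gen: "g \<in> G \<Longrightarrow> rz Z g \<in> Sp Z S B G"
proof -
  assume g: "g \<in> G"
  have "rz Z (\<lambda>p. (\<lambda>_. 1) p * g p) \<in> gens Z S B G" unfolding gens_def using mono_zero g by force
  then show ?thesis unfolding Sp_def by (auto intro: fvs.span_base)
qed

lemma Sp_var:
  assumes "s \<in> S" "j \<le> B" "finite S"
  shows "rz Z (\<lambda>p. p s ^ j) \<in> Sp Z S B {\<lambda>_. 1}"
proof -
  define b where "b = restrict (\<lambda>i. if i = s then j else 0) S"
  have "b \<in> PiE S (\<lambda>_. {..B})" unfolding b_def using assms by auto
  moreover have "mono S b = (\<lambda>p. p s ^ j)"
  proof -
    have "mono S b p = p s ^ j" for p
      unfolding mono_def b_def using assms by (simp add: prod.remove[of S s] prod.neutral)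
    then show ?thesis by (auto simp: fun_eq_iff)
  qed
  ultimately have "(\<lambda>p. p s ^ j) \<in> MB S B" unfolding MB_def by (metis image_eqI)
  then have "rz Z (\<lambda>p. (\<lambda>p. p s ^ j) p * (\<lambda>_. 1) p) \<in> gens Z S B {\<lambda>_. 1}" unfolding gens_def by force
  then show ?thesis unfolding Sp_def by (auto intro: fvs.span_base)
qed

lemma Sp_zpoly: "f \<in> zpoly S \<Longrightarrow> finite S \<Longrightarrow> \<exists>B. rz Z f \<in> Sp Z S B {\<lambda>_. 1}"
proof (induction rule: zpoly.induct)
  case (zpoly_const c)
  have "rz Z (\<lambda>_. 1) \<in> Sp Z S 0 {\<lambda>_. 1}" by (rule Sp_gen) simp
  then have "sc c (rz Z (\<lambda>_. 1)) \<in> Sp Z S 0 {\<lambda>_. 1}" unfolding Sp_def by (rule fvs.span_scale)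
  moreover have "sc c (rz Z (\<lambda>_. 1)) = rz Z (\<lambda>_. c)" by (auto simp: rz_def fun_eq_iff)
  ultimately show ?case by auto
next
  case (zpoly_var i)
  show ?case using Sp_var[OF zpoly_var(1), of 1 1 Z] zpoly_var(2) by auto
next
  case (zpoly_add f g)
  then obtain B1 B2 where "rz Z f \<in> Sp Z S B1 {\<lambda>_. 1}" "rz Z g \<in> Sp Z S B2 {\<lambda>_. 1}" by blast
  then have "rz Z f \<in> Sp Z S (max B1 B2) {\<lambda>_. 1}" "rz Z g \<in> Sp Z S (max B1 B2) {\<lambda>_. 1}"
    using Sp_mono[of B1 "max B1 B2" "{\<lambda>_. 1}" "{\<lambda>_. 1}" Z S] Sp_mono[of B2 "max B1 B2" "{\<lambda>_. 1}" "{\<lambda>_. 1}" Z S] by auto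
  then have "rz Z f + rz Z g \<in> Sp Z S (max B1 B2) {\<lambda>_. 1}" unfolding Sp_def by (rule fvs.span_add)
  then have "rz Z (\<lambda>p. f p + g p) \<in> Sp Z S (max B1 B2) {\<lambda>_. 1}" by (simp only: rz_add)
  then show ?case by blast
next
  case (zpoly_mult f g)
  then obtain B1 B2 where "rz Z f \<in> Sp Z S B1 {\<lambda>_. 1}" "rz Z g \<in> Sp Z S B2 {\<lambda>_. 1}" by blast
  then have "rz Z f * rz Z g \<in> Sp Z S (B1 + B2) (gmul {\<lambda>_. 1} {\<lambda>_. 1})" by (rule Sp_mult)
  then have "rz Z (\<lambda>p. f p * g p) \<in> Sp Z S (B1 + B2) {\<lambda>_. 1}" by (simp only: rz_mult gmul_one)
  then show ?case by blast
qed


lemma Sp_pow: "rz Z f \<in> Sp Z S B {\<lambda>_. 1} \<Longrightarrow> rz Z (\<lambda>p. f p ^ k) \<in> Sp Z S (B * k) {\<lambda>_. 1}"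
proof (induction k)
  case 0 then show ?case by (simp add: Sp_gen)
next
  case (Suc k)
  then have "rz Z f * rz Z (\<lambda>p. f p ^ k) \<in> Sp Z S (B + B * k) (gmul {\<lambda>_. 1} {\<lambda>_. 1})"
    by (intro Sp_mult) auto
  then have "rz Z (\<lambda>p. f p * f p ^ k) \<in> Sp Z S (B + B * k) {\<lambda>_. 1}" by (simp only: rz_mult gmul_one)
  then show ?case by (simp add: algebra_simps)
qed

lemma Sp_scaleL: "u \<in> Sp Z S B1 {\<lambda>_. 1} \<Longrightarrow> v \<in> Sp Z S B2 G \<Longrightarrow> u * v \<in> Sp Z S (B1 + B2) G"
  using Sp_mult[of u Z S B1 "{\<lambda>_. 1}" v B2 G] by (simp only: gmul_one)

lemma Sp_mono_B: "u \<in> Sp Z S B G \<Longrightarrow> B \<le> B' \<Longrightarrow> u \<in> Sp Z S B' G"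
  using Sp_mono[of B B' G G Z S] by blast

lemma Sp_mono_G: "u \<in> Sp Z S B G \<Longrightarrow> G \<subseteq> G' \<Longrightarrow> u \<in> Sp Z S B G'"
  using Sp_mono[of B B G G' Z S] by blast

lemma gmul_mono: "G1 \<subseteq> G1' \<Longrightarrow> G2 \<subseteq> G2' \<Longrightarrow> gmul G1 G2 \<subseteq> gmul G1' G2'"
  unfolding gmul_def by auto

lemma finite_gmul: "finite G1 \<Longrightarrow> finite G2 \<Longrightarrow> finite (gmul G1 G2)"
  unfolding gmul_def by auto

definition good :: "('i \<Rightarrow> complex) set \<Rightarrow> 'i set \<Rightarrow> (('i \<Rightarrow> complex) \<Rightarrow> complex) \<Rightarrow> bool" where
  "good Z S f \<longleftrightarrow> (\<exists>G L c. finite G \<and> L \<in> zpoly S \<and> (\<exists>p\<in>Z. L p \<noteq> 0) \<and>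
     (\<forall>k j. j \<le> k \<longrightarrow> rz Z (\<lambda>p. L p ^ k * f p ^ j) \<in> Sp Z S (c * (k + 1)) G))"

lemma good_const: assumes "Z \<noteq> {}" shows "good Z S (\<lambda>_. a)"
  unfolding good_def
proof (intro exI conjI allI impI)
  show "finite {\<lambda>_::'a \<Rightarrow> complex. 1::complex}" by simp
  show "(\<lambda>_. 1) \<in> zpoly S" by (rule zpoly_const)
  show "\<exists>p\<in>Z. (1::complex) \<noteq> 0" using assms by auto
  fix k j :: nat
  have "sc (a ^ j) (rz Z (\<lambda>_. 1)) \<in> Sp Z S (0 * (k + 1)) {\<lambda>_. 1}"
    unfolding Sp_def by (rule fvs.span_scale) (simp add: Sp_gen[unfolded Sp_def])
  moreover have "sc (a ^ j) (rz Z (\<lambda>_. 1)) = rz Z (\<lambda>p. 1 ^ k * a ^ j)" by (auto simp: rz_def fun_eq_iff)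
  ultimately show "rz Z (\<lambda>p. 1 ^ k * a ^ j) \<in> Sp Z S (0 * (k + 1)) {\<lambda>_. 1}" by simp
qed

lemma good_var: assumes "Z \<noteq> {}" "s \<in> S" "finite S" shows "good Z S (\<lambda>p. p s)"
  unfolding good_def
proof (intro exI conjI allI impI)
  show "finite {\<lambda>_::'a \<Rightarrow> complex. 1::complex}" by simp
  show "(\<lambda>_. 1) \<in> zpoly S" by (rule zpoly_const)
  show "\<exists>p\<in>Z. (1::complex) \<noteq> 0" using assms by auto
  fix k j :: nat assume "j \<le> k"
  then have "rz Z (\<lambda>p. p s ^ j) \<in> Sp Z S (1 * (k + 1)) {\<lambda>_. 1}" by (intro Sp_var assms) simp
  then show "rz Z (\<lambda>p. 1 ^ k * p s ^ j) \<in> Sp Z S (1 * (k + 1)) {\<lambda>_. 1}" by simp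
qed

lemma dom_nonzero:
  assumes "zdom I Z" "f \<in> zpoly I" "g \<in> zpoly I" "\<exists>p\<in>Z. f p \<noteq> 0" "\<exists>p\<in>Z. g p \<noteq> 0"
  shows "\<exists>p\<in>Z. f p * g p \<noteq> 0"
  using assms unfolding zdom_def by blast

lemma good_mult:
  assumes dom: "zdom I Z" and SI: "S \<subseteq> I" and f: "good Z S f" and g: "good Z S g"
  shows "good Z S (\<lambda>p. f p * g p)"
proof -
  obtain Gf Lf cf where F: "finite Gf" "Lf \<in> zpoly S" "\<exists>p\<in>Z. Lf p \<noteq> 0"
    "\<forall>k j. j \<le> k \<longrightarrow> rz Z (\<lambda>p. Lf p ^ k * f p ^ j) \<in> Sp Z S (cf * (k + 1)) Gf"
    using f unfolding good_def by blast
  obtain Gg Lg cg where G: "finite Gg" "Lg \<in> zpoly S" "\<exists>p\<in>Z. Lg p \<noteq> 0"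
    "\<forall>k j. j \<le> k \<longrightarrow> rz Z (\<lambda>p. Lg p ^ k * g p ^ j) \<in> Sp Z S (cg * (k + 1)) Gg"
    using g unfolding good_def by blast
  show ?thesis unfolding good_def
  proof (intro exI conjI allI impI)
    show "finite (gmul Gf Gg)" using F G by (simp add: finite_gmul)
    show "(\<lambda>p. Lf p * Lg p) \<in> zpoly S" using F G by (simp add: zpoly_mult)
    show "\<exists>p\<in>Z. Lf p * Lg p \<noteq> 0"
      by (rule dom_nonzero[OF dom]) (use F G SI zpoly_mono in auto)
    fix k j :: nat assume jk: "j \<le> k"
    have "rz Z (\<lambda>p. Lf p ^ k * f p ^ j) * rz Z (\<lambda>p. Lg p ^ k * g p ^ j) \<in> Sp Z S (cf * (k + 1) + cg * (k + 1)) (gmul Gf Gg)"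
      by (rule Sp_mult) (use F G jk in auto)
    moreover have "rz Z (\<lambda>p. Lf p ^ k * f p ^ j) * rz Z (\<lambda>p. Lg p ^ k * g p ^ j) =
        rz Z (\<lambda>p. (Lf p * Lg p) ^ k * (f p * g p) ^ j)"
      by (auto simp: rz_def fun_eq_iff power_mult_distrib)
    ultimately show "rz Z (\<lambda>p. (Lf p * Lg p) ^ k * (f p * g p) ^ j) \<in> Sp Z S ((cf + cg) * (k + 1)) (gmul Gf Gg)"
      by (simp add: algebra_simps)
  qed
qed

lemma good_add:
  assumes dom: "zdom I Z" and SI: "S \<subseteq> I" and f: "good Z S f" and g: "good Z S g"
  shows "good Z S (\<lambda>p. f p + g p)"
proof -
  obtain Gf Lf cf where F: "finite Gf" "Lf \<in> zpoly S" "\<exists>p\<in>Z. Lf p \<noteq> 0"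
    "\<forall>k j. j \<le> k \<longrightarrow> rz Z (\<lambda>p. Lf p ^ k * f p ^ j) \<in> Sp Z S (cf * (k + 1)) Gf"
    using f unfolding good_def by blast
  obtain Gg Lg cg where G: "finite Gg" "Lg \<in> zpoly S" "\<exists>p\<in>Z. Lg p \<noteq> 0"
    "\<forall>k j. j \<le> k \<longrightarrow> rz Z (\<lambda>p. Lg p ^ k * g p ^ j) \<in> Sp Z S (cg * (k + 1)) Gg"
    using g unfolding good_def by blast
  show ?thesis unfolding good_def
  proof (intro exI conjI allI impI)
    show "finite (gmul Gf Gg)" using F G by (simp add: finite_gmul)
    show "(\<lambda>p. Lf p * Lg p) \<in> zpoly S" using F G by (simp add: zpoly_mult)
    show "\<exists>p\<in>Z. Lf p * Lg p \<noteq> 0"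
      by (rule dom_nonzero[OF dom]) (use F G SI zpoly_mono in auto)
    fix k j :: nat assume jk: "j \<le> k"
    have trm: "rz Z (\<lambda>p. Lf p ^ k * f p ^ i) * rz Z (\<lambda>p. Lg p ^ k * g p ^ (j - i)) \<in> Sp Z S ((cf + cg) * (k + 1)) (gmul Gf Gg)"
      if "i \<in> {..j}" for i
    proof -
      have "rz Z (\<lambda>p. Lf p ^ k * f p ^ i) * rz Z (\<lambda>p. Lg p ^ k * g p ^ (j - i)) \<in> Sp Z S (cf * (k + 1) + cg * (k + 1)) (gmul Gf Gg)"
        by (rule Sp_mult) (use F G jk that in auto)
      then show ?thesis by (simp add: algebra_simps)
    qed
    have eq: "rz Z (\<lambda>p. (Lf p * Lg p) ^ k * (f p + g p) ^ j) =
      (\<Sum>i\<in>{..j}. sc (of_nat (j choose i)) (rz Z (\<lambda>p. Lf p ^ k * f p ^ i) * rz Z (\<lambda>p. Lg p ^ k * g p ^ (j - i))))"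
    proof (rule ext)
      fix p
      show "rz Z (\<lambda>p. (Lf p * Lg p) ^ k * (f p + g p) ^ j) p =
        (\<Sum>i\<in>{..j}. sc (of_nat (j choose i)) (rz Z (\<lambda>p. Lf p ^ k * f p ^ i) * rz Z (\<lambda>p. Lg p ^ k * g p ^ (j - i)))) p"
        unfolding sum_fun_apply
        by (cases "p \<in> Z") (simp_all add: rz_def binomial_ring sum_distrib_left power_mult_distrib algebra_simps)
    qed
    show "rz Z (\<lambda>p. (Lf p * Lg p) ^ k * (f p + g p) ^ j) \<in> Sp Z S ((cf + cg) * (k + 1)) (gmul Gf Gg)"
      unfolding eq Sp_def by (intro fvs.span_sum fvs.span_scale trm[unfolded Sp_def])
  qed
qed

lemma good_zpoly:
  assumes "f \<in> zpoly X" "Z \<noteq> {}" "zdom I Z" "S \<subseteq> I" "\<And>c. c \<in> X \<Longrightarrow> good Z S (\<lambda>p. p c)"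
  shows "good Z S f"
  using assms
proof (induction rule: zpoly.induct)
  case (zpoly_const c) then show ?case by (simp add: good_const)
next
  case (zpoly_var i) then show ?case by simp
next
  case (zpoly_add f g) then show ?case by (simp add: good_add)
next
  case (zpoly_mult f g) then show ?case by (simp add: good_mult)
qed


lemma bound_exists:
  fixes e :: nat and P :: "nat \<Rightarrow> nat \<Rightarrow> bool"
  assumes "\<forall>k<e. \<exists>B. P k B" "\<And>k B B'. P k B \<Longrightarrow> B \<le> B' \<Longrightarrow> P k B'"
  shows "\<exists>B. \<forall>k<e. P k B"
  using assms(1)
proof (induction e)
  case 0 then show ?case by simp
next
  case (Suc e)
  then obtain B1 where B1: "\<forall>k<e. P k B1" by auto
  obtain B2 where B2: "P e B2" using Suc.prems by auto
  have "\<forall>k<Suc e. P k (max B1 B2)"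
  proof (intro allI impI)
    fix k assume "k < Suc e"
    then have "k < e \<or> k = e" by auto
    then show "P k (max B1 B2)"
    proof
      assume "k < e" show ?thesis by (rule assms(2)[OF _ max.cobounded1]) (use B1 \<open>k < e\<close> in simp)
    next
      assume "k = e" show ?thesis by (rule assms(2)[OF _ max.cobounded2]) (use B2 \<open>k = e\<close> in simp)
    qed
  qed
  then show ?case by blast
qed

lemma good_rel5:
  assumes S: "finite S" and L: "L \<in> zpoly S" "\<exists>p\<in>Z. L p \<noteq> 0"
    and q: "\<forall>i<e. q i \<in> zpoly S"
    and rel: "\<forall>p\<in>Z. L p * f p ^ e = (\<Sum>i<e. q i p * f p ^ i)"
  shows "good Z S f"
proof -
  have e: "e \<ge> 1"
  proof (rule ccontr)
    assume "\<not> e \<ge> 1" then have "e = 0" by simp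
    then show False using rel L(2) by auto
  qed
  obtain l where l: "rz Z L \<in> Sp Z S l {\<lambda>_. 1}" using Sp_zpoly[OF L(1) S] by blast
  have "\<forall>i<e. \<exists>B. rz Z (q i) \<in> Sp Z S B {\<lambda>_. 1}" using Sp_zpoly S q by blast
  then obtain Bq where Bq: "\<forall>i<e. rz Z (q i) \<in> Sp Z S Bq {\<lambda>_. 1}"
    using bound_exists[where P="\<lambda>i B. rz Z (q i) \<in> Sp Z S B {\<lambda>_. 1}"] Sp_mono_B by blast
  define G where "G = (\<lambda>i p. f p ^ i) ` {..<e}"
  define c where "c = l + Bq"
  have claim: "\<forall>k. j \<le> k \<longrightarrow> rz Z (\<lambda>p. L p ^ k * f p ^ j) \<in> Sp Z S (c * (k + 1)) G" for j
  proof (induction j rule: less_induct)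
    case (less j)
    show ?case
    proof (intro allI impI)
      fix k assume jk: "j \<le> k"
      show "rz Z (\<lambda>p. L p ^ k * f p ^ j) \<in> Sp Z S (c * (k + 1)) G"
      proof (cases "j < e")
        case True
        have "rz Z (\<lambda>p. L p ^ k) * rz Z (\<lambda>p. f p ^ j) \<in> Sp Z S (l * k + 0) G"
        proof (rule Sp_scaleL)
          show "rz Z (\<lambda>p. L p ^ k) \<in> Sp Z S (l * k) {\<lambda>_. 1}" by (rule Sp_pow[OF l])
          show "rz Z (\<lambda>p. f p ^ j) \<in> Sp Z S 0 G" by (rule Sp_gen) (use True in \<open>auto simp: G_def\<close>)
        qed
        then have "rz Z (\<lambda>p. L p ^ k * f p ^ j) \<in> Sp Z S (l * k) G" by (simp add: rz_mult)
        moreover have "l * k \<le> c * (k + 1)" unfolding c_def by (simp add: add_mult_distrib2 trans_le_add1 add_mult_distrib)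
        ultimately show ?thesis using Sp_mono_B by blast
      next
        case False
        then have ej: "e \<le> j" by simp
        then have "k \<ge> 1" using e jk by simp
        then obtain k' where k': "k = Suc k'" by (cases k) auto
        have trm: "rz Z (q i) * rz Z (\<lambda>p. L p ^ k' * f p ^ (j - e + i)) \<in> Sp Z S (c * (k + 1)) G"
          if i: "i \<in> {..<e}" for i
        proof -
          have "j - e + i < j" using i e ej by auto
          moreover have "j - e + i \<le> k'" using i e ej jk k' by auto
          ultimately have "rz Z (\<lambda>p. L p ^ k' * f p ^ (j - e + i)) \<in> Sp Z S (c * (k' + 1)) G"
            using less.IH by blast
          then have "rz Z (q i) * rz Z (\<lambda>p. L p ^ k' * f p ^ (j - e + i)) \<in> Sp Z S (Bq + c * (k' + 1)) G"
            using Bq i by (intro Sp_scaleL) auto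
          moreover have "Bq + c * (k' + 1) \<le> c * (k + 1)" unfolding c_def k' by (simp add: algebra_simps)
          ultimately show ?thesis using Sp_mono_B by blast
        qed
        have eq: "rz Z (\<lambda>p. L p ^ k * f p ^ j) = (\<Sum>i\<in>{..<e}. rz Z (q i) * rz Z (\<lambda>p. L p ^ k' * f p ^ (j - e + i)))"
        proof (rule ext)
          fix p
          show "rz Z (\<lambda>p. L p ^ k * f p ^ j) p = (\<Sum>i\<in>{..<e}. rz Z (q i) * rz Z (\<lambda>p. L p ^ k' * f p ^ (j - e + i))) p"
          proof (cases "p \<in> Z")
            case True
            have fj: "f p ^ j = f p ^ (j - e) * f p ^ e" using ej by (simp add: power_add[symmetric])
            have "L p ^ k * f p ^ j = L p ^ k' * f p ^ (j - e) * (L p * f p ^ e)"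
              unfolding fj k' by (simp add: algebra_simps)
            also have "\<dots> = L p ^ k' * f p ^ (j - e) * (\<Sum>i<e. q i p * f p ^ i)" using rel True by simp
            also have "\<dots> = (\<Sum>i<e. q i p * (L p ^ k' * f p ^ (j - e + i)))"
              by (simp add: sum_distrib_left power_add algebra_simps)
            finally show ?thesis using True by (simp add: rz_def sum_fun_apply)
          next
            case False then show ?thesis by (simp add: rz_def sum_fun_apply)
          qed
        qed
        show ?thesis unfolding eq Sp_def by (intro fvs.span_sum trm[unfolded Sp_def])
      qed
    qed
  qed
  show ?thesis unfolding good_def
  proof (intro exI conjI allI impI)
    show "finite G" unfolding G_def by simp
    show "L \<in> zpoly S" by (rule L)
    show "\<exists>p\<in>Z. L p \<noteq> 0" by (rule L)
    fix k j :: nat assume "j \<le> k" then show "rz Z (\<lambda>p. L p ^ k * f p ^ j) \<in> Sp Z S (c * (k + 1)) G"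
      using claim by blast
  qed
qed

lemma good_rel4:
  assumes S: "finite S" and dom: "zdom I Z" and SI: "S \<subseteq> I"
    and L: "L \<in> zpoly S" "\<exists>p\<in>Z. L p \<noteq> 0"
    and y: "good Z S y" and e: "e \<ge> 1"
    and rel: "\<forall>p\<in>Z. L p * f p ^ e = y p"
  shows "good Z S f"
proof -
  obtain Gy Ly cy where Y: "finite Gy" "Ly \<in> zpoly S" "\<exists>p\<in>Z. Ly p \<noteq> 0"
    "\<forall>k j. j \<le> k \<longrightarrow> rz Z (\<lambda>p. Ly p ^ k * y p ^ j) \<in> Sp Z S (cy * (k + 1)) Gy"
    using y unfolding good_def by blast
  obtain l where l: "rz Z L \<in> Sp Z S l {\<lambda>_. 1}" using Sp_zpoly[OF L(1) S] by blast
  define G where "G = gmul Gy ((\<lambda>i p. f p ^ i) ` {..<e})"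
  show ?thesis unfolding good_def
  proof (intro exI conjI allI impI)
    show "finite G" unfolding G_def using Y(1) by (simp add: finite_gmul)
    show "(\<lambda>p. L p * Ly p) \<in> zpoly S" using L Y by (simp add: zpoly_mult)
    show "\<exists>p\<in>Z. L p * Ly p \<noteq> 0"
      by (rule dom_nonzero[OF dom]) (use L Y SI zpoly_mono in auto)
    fix k j :: nat assume jk: "j \<le> k"
    define q where "q = j div e"
    define r where "r = j mod e"
    have jqr: "j = e * q + r" unfolding q_def r_def by simp
    have re: "r < e" unfolding r_def using e by simp
    have qk: "q \<le> k" using jk jqr e
      by (metis le_trans mult_le_mono1 mult_1 le_add1 mult.commute)
    have A: "rz Z (\<lambda>p. L p ^ (k - q)) \<in> Sp Z S (l * (k - q)) {\<lambda>_. 1}" by (rule Sp_pow[OF l])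
    have B: "rz Z (\<lambda>p. Ly p ^ k * y p ^ q) \<in> Sp Z S (cy * (k + 1)) Gy" using Y(4) qk by blast
    have C: "rz Z (\<lambda>p. f p ^ r) \<in> Sp Z S 0 {\<lambda>p. f p ^ r}" by (rule Sp_gen) simp
    have "rz Z (\<lambda>p. Ly p ^ k * y p ^ q) * rz Z (\<lambda>p. f p ^ r) \<in> Sp Z S (cy * (k + 1) + 0) (gmul Gy {\<lambda>p. f p ^ r})"
      by (rule Sp_mult[OF B C])
    moreover have "gmul Gy {\<lambda>p. f p ^ r} \<subseteq> G" unfolding G_def by (rule gmul_mono) (use re in auto)
    ultimately have BC: "rz Z (\<lambda>p. Ly p ^ k * y p ^ q) * rz Z (\<lambda>p. f p ^ r) \<in> Sp Z S (cy * (k + 1)) G"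
      using Sp_mono_G by auto
    have ABC: "rz Z (\<lambda>p. L p ^ (k - q)) * (rz Z (\<lambda>p. Ly p ^ k * y p ^ q) * rz Z (\<lambda>p. f p ^ r)) \<in> Sp Z S (l * (k - q) + cy * (k + 1)) G"
      by (rule Sp_scaleL[OF A BC])
    have bnd: "l * (k - q) + cy * (k + 1) \<le> (l + cy) * (k + 1)"
      by (simp add: algebra_simps)
    have eq: "rz Z (\<lambda>p. (L p * Ly p) ^ k * f p ^ j) = rz Z (\<lambda>p. L p ^ (k - q)) * (rz Z (\<lambda>p. Ly p ^ k * y p ^ q) * rz Z (\<lambda>p. f p ^ r))"
    proof (rule ext)
      fix p
      show "rz Z (\<lambda>p. (L p * Ly p) ^ k * f p ^ j) p = (rz Z (\<lambda>p. L p ^ (k - q)) * (rz Z (\<lambda>p. Ly p ^ k * y p ^ q) * rz Z (\<lambda>p. f p ^ r))) p"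
      proof (cases "p \<in> Z")
        case True
        have yp: "y p = L p * f p ^ e" using rel True by simp
        have Lk: "L p ^ k = L p ^ q * L p ^ (k - q)" using qk by (simp add: power_add[symmetric])
        have "(L p * Ly p) ^ k * f p ^ j = L p ^ (k - q) * (Ly p ^ k * (L p * f p ^ e) ^ q) * f p ^ r"
          unfolding jqr by (simp add: Lk power_mult_distrib power_add power_mult algebra_simps)
        then show ?thesis using True yp by (simp add: rz_def algebra_simps)
      next
        case False then show ?thesis by (simp add: rz_def)
      qed
    qed
    show "rz Z (\<lambda>p. (L p * Ly p) ^ k * f p ^ j) \<in> Sp Z S ((l + cy) * (k + 1)) G"
      unfolding eq using ABC bnd Sp_mono_B by blast
  qed
qed


lemma mono_indep:
  fixes A :: "'a set" and c :: "('a \<Rightarrow> nat) \<Rightarrow> complex"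
  assumes "finite A"
  shows "(\<forall>q::'a \<Rightarrow> complex. (\<Sum>\<alpha>\<in>PiE A (\<lambda>_. {..D}). c \<alpha> * (\<Prod>a\<in>A. q a ^ \<alpha> a)) = 0)
     \<Longrightarrow> \<forall>\<alpha>\<in>PiE A (\<lambda>_. {..D}). c \<alpha> = 0"
  using assms
proof (induction A arbitrary: c rule: finite_induct)
  case empty
  then show ?case by simp
next
  case (insert a A)
  let ?X = "PiE A (\<lambda>_. {..D})"
  let ?m = "\<lambda>(i::nat, \<beta>::'a \<Rightarrow> nat). \<beta>(a := i)"
  have inj: "inj_on ?m ({..D} \<times> ?X)" using inj_combinator[OF insert.hyps(2), of "\<lambda>_. {..D}"] by simp
  have eqX: "PiE (insert a A) (\<lambda>_. {..D}) = ?m ` ({..D} \<times> ?X)" by (rule PiE_insert_eq)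
  have prodeq: "(\<Prod>b\<in>insert a A. q b ^ (\<beta>(a := i)) b) = q a ^ i * (\<Prod>b\<in>A. q b ^ \<beta> b)" for q \<beta> i
  proof -
    have "(\<Prod>b\<in>insert a A. q b ^ (\<beta>(a := i)) b) = q a ^ i * (\<Prod>b\<in>A. q b ^ (\<beta>(a := i)) b)"
      using insert.hyps by simp
    also have "(\<Prod>b\<in>A. q b ^ (\<beta>(a := i)) b) = (\<Prod>b\<in>A. q b ^ \<beta> b)"
      by (rule prod.cong) (use insert.hyps(2) in auto)
    finally show ?thesis .
  qed
  define C where "C q i = (\<Sum>\<beta>\<in>?X. c (\<beta>(a := i)) * (\<Prod>b\<in>A. q b ^ \<beta> b))" for q i
  have sumeq: "(\<Sum>\<alpha>\<in>PiE (insert a A) (\<lambda>_. {..D}). c \<alpha> * (\<Prod>b\<in>insert a A. q b ^ \<alpha> b)) = (\<Sum>i\<le>D. C q i * q a ^ i)" for q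
  proof -
    have "(\<Sum>\<alpha>\<in>PiE (insert a A) (\<lambda>_. {..D}). c \<alpha> * (\<Prod>b\<in>insert a A. q b ^ \<alpha> b))
        = (\<Sum>x\<in>{..D} \<times> ?X. c (?m x) * (\<Prod>b\<in>insert a A. q b ^ (?m x) b))"
      unfolding eqX by (rule sum.reindex[OF inj, unfolded comp_def])
    also have "\<dots> = (\<Sum>i\<le>D. \<Sum>\<beta>\<in>?X. c (\<beta>(a := i)) * (\<Prod>b\<in>insert a A. q b ^ (\<beta>(a := i)) b))"
      by (simp only: sum.cartesian_product split_def)
    also have "\<dots> = (\<Sum>i\<le>D. C q i * q a ^ i)"
      unfolding C_def prodeq by (intro sum.cong refl) (simp add: sum_distrib_left sum_distrib_right algebra_simps)
    finally show ?thesis .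
  qed
  have C0: "C q i = 0" if "i \<le> D" for q i
  proof -
    have "\<forall>x. (\<Sum>i\<le>D. C (q(a := x)) i * x ^ i) = 0"
      using insert.prems sumeq[of "q(a := x)" for x] by auto
    moreover have "C (q(a := x)) i = C q i" for x i
      unfolding C_def by (intro sum.cong refl arg_cong2[where f="(*)"] prod.cong) (use insert.hyps(2) in auto)
    ultimately have "\<forall>x. (\<Sum>i\<le>D. C q i * x ^ i) = 0" by simp
    then show ?thesis using polyfun_eq_0 that by blast
  qed
  have ci: "\<forall>\<beta>\<in>?X. c (\<beta>(a := i)) = 0" if "i \<le> D" for i
    by (rule insert.IH[where c="\<lambda>\<beta>. c (\<beta>(a := i))"]) (use C0[OF that] in \<open>simp add: C_def\<close>)
  show ?case
  proof
    fix \<alpha> assume "\<alpha> \<in> PiE (insert a A) (\<lambda>_. {..D})"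
    then obtain i \<beta> where "i \<le> D" "\<beta> \<in> ?X" "\<alpha> = \<beta>(a := i)" unfolding eqX by auto
    then show "c \<alpha> = 0" using ci by blast
  qed
qed

lemma lin_dep:
  fixes h :: "'x \<Rightarrow> ('y \<Rightarrow> complex)"
  assumes X: "finite X" and H: "finite H" and card: "card X > card H"
    and sp: "\<forall>x\<in>X. h x \<in> fvs.span H"
  shows "\<exists>u. (\<exists>x\<in>X. u x \<noteq> 0) \<and> (\<Sum>x\<in>X. sc (u x) (h x)) = 0"
proof (cases "inj_on h X")
  case False
  then obtain x x' where xx: "x \<in> X" "x' \<in> X" "x \<noteq> x'" "h x = h x'" unfolding inj_on_def by blast
  define u where "u z = (if z = x then 1 else if z = x' then -1 else (0::complex))" for z
  have "(\<Sum>z\<in>X. sc (u z) (h z)) = (\<Sum>z\<in>{x, x'}. sc (u z) (h z))"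
    by (rule sum.mono_neutral_right) (use X xx in \<open>auto simp: u_def sc_def fun_eq_iff\<close>)
  also have "\<dots> = 0" using xx by (auto simp: u_def sc_def fun_eq_iff)
  finally show ?thesis using xx(1) by (intro exI[of _ u]) (auto simp: u_def)
next
  case True
  have "\<not> fvs.independent (h ` X)"
  proof
    assume "fvs.independent (h ` X)"
    then have "card (h ` X) \<le> card H" using fvs.independent_span_bound[OF H] sp by blast
    then show False using card True by (simp add: card_image)
  qed
  then obtain w where w: "\<exists>v\<in>h ` X. w v \<noteq> 0" "(\<Sum>v\<in>h ` X. sc (w v) v) = 0"
    using fvs.dependent_finite[of "h ` X"] X by auto
  have "(\<Sum>x\<in>X. sc (w (h x)) (h x)) = (\<Sum>v\<in>h ` X. sc (w v) v)"
    by (rule sum.reindex[OF True, unfolded comp_def, symmetric])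
  then show ?thesis using w by (intro exI[of _ "\<lambda>x. w (h x)"]) auto
qed


lemma multi_good:
  fixes y :: "'a \<Rightarrow> ('i \<Rightarrow> complex) \<Rightarrow> complex" and A :: "'a set"
  assumes "finite A" "Z \<noteq> {}" "zdom I Z" "S \<subseteq> I" "\<forall>a\<in>A. good Z S (y a)"
  shows "\<exists>G L c. finite G \<and> L \<in> zpoly S \<and> (\<exists>p\<in>Z. L p \<noteq> 0) \<and>
    (\<forall>k \<alpha>. (\<forall>a\<in>A. \<alpha> a \<le> k) \<longrightarrow> rz Z (\<lambda>p. L p ^ k * (\<Prod>a\<in>A. y a p ^ \<alpha> a)) \<in> Sp Z S (c * (k + 1)) G)"
  using assms
proof (induction A rule: finite_induct)
  case empty
  show ?case
  proof (intro exI conjI allI impI)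
    show "finite {\<lambda>_::'i \<Rightarrow> complex. 1::complex}" by simp
    show "(\<lambda>_. 1) \<in> zpoly S" by (rule zpoly_const)
    show "\<exists>p\<in>Z. (1::complex) \<noteq> 0" using empty by auto
    fix k :: nat and \<alpha> :: "'a \<Rightarrow> nat"
    have "rz Z (\<lambda>_. 1) \<in> Sp Z S (0 * (k + 1)) {\<lambda>_. 1}" by (rule Sp_gen) simp
    then show "rz Z (\<lambda>p. 1 ^ k * (\<Prod>a\<in>{}. y a p ^ \<alpha> a)) \<in> Sp Z S (0 * (k + 1)) {\<lambda>_. 1}" by simp
  qed
next
  case (insert a A)
  then obtain G1 L1 c1 where I1: "finite G1" "L1 \<in> zpoly S" "\<exists>p\<in>Z. L1 p \<noteq> 0"
    "\<forall>k \<alpha>. (\<forall>a\<in>A. \<alpha> a \<le> k) \<longrightarrow> rz Z (\<lambda>p. L1 p ^ k * (\<Prod>a\<in>A. y a p ^ \<alpha> a)) \<in> Sp Z S (c1 * (k + 1)) G1"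
    by auto
  obtain Ga La ca where Ia: "finite Ga" "La \<in> zpoly S" "\<exists>p\<in>Z. La p \<noteq> 0"
    "\<forall>k j. j \<le> k \<longrightarrow> rz Z (\<lambda>p. La p ^ k * y a p ^ j) \<in> Sp Z S (ca * (k + 1)) Ga"
    using insert.prems(4) unfolding good_def by auto
  show ?case
  proof (intro exI conjI allI impI)
    show "finite (gmul G1 Ga)" using I1 Ia by (simp add: finite_gmul)
    show "(\<lambda>p. L1 p * La p) \<in> zpoly S" using I1 Ia by (simp add: zpoly_mult)
    show "\<exists>p\<in>Z. L1 p * La p \<noteq> 0"
      by (rule dom_nonzero[OF insert.prems(2)]) (use I1 Ia insert.prems(3) zpoly_mono in auto)
    fix k :: nat and \<alpha> :: "'a \<Rightarrow> nat" assume H: "\<forall>b\<in>insert a A. \<alpha> b \<le> k"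
    have "rz Z (\<lambda>p. L1 p ^ k * (\<Prod>a\<in>A. y a p ^ \<alpha> a)) * rz Z (\<lambda>p. La p ^ k * y a p ^ \<alpha> a)
       \<in> Sp Z S (c1 * (k + 1) + ca * (k + 1)) (gmul G1 Ga)"
      by (rule Sp_mult) (use I1 Ia H in auto)
    moreover have "rz Z (\<lambda>p. L1 p ^ k * (\<Prod>a\<in>A. y a p ^ \<alpha> a)) * rz Z (\<lambda>p. La p ^ k * y a p ^ \<alpha> a)
      = rz Z (\<lambda>p. (L1 p * La p) ^ k * (\<Prod>a\<in>insert a A. y a p ^ \<alpha> a))"
      using insert.hyps by (auto simp: rz_def fun_eq_iff power_mult_distrib algebra_simps)
    ultimately show "rz Z (\<lambda>p. (L1 p * La p) ^ k * (\<Prod>a\<in>insert a A. y a p ^ \<alpha> a)) \<in> Sp Z S ((c1 + ca) * (k + 1)) (gmul G1 Ga)"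
      by (simp add: algebra_simps)
  qed
qed

lemma count_ineq:
  fixes c K d N :: nat
  assumes "d < N"
  defines "D \<equiv> (c + 1) ^ d * K"
  shows "(c * (D + 1) + 1) ^ d * K < (D + 1) ^ N"
proof -
  have "c * (D + 1) + 1 \<le> (c + 1) * (D + 1)" by simp
  then have "(c * (D + 1) + 1) ^ d \<le> ((c + 1) * (D + 1)) ^ d" by (rule power_mono) simp
  then have "(c * (D + 1) + 1) ^ d * K \<le> ((c + 1) * (D + 1)) ^ d * K"
    by (rule mult_right_mono) simp
  also have "\<dots> = (c + 1) ^ d * (D + 1) ^ d * K" by (simp only: power_mult_distrib)
  also have "\<dots> = D * (D + 1) ^ d" unfolding D_def by simp
  also have "\<dots> < (D + 1) * (D + 1) ^ d" by simp
  also have "\<dots> = (D + 1) ^ Suc d" by simp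
  also have "\<dots> \<le> (D + 1) ^ N" by (rule power_increasing) (use assms in auto)
  finally show ?thesis .
qed

lemma counting_explicit:
  fixes y :: "'a \<Rightarrow> ('i \<Rightarrow> complex) \<Rightarrow> complex"
  assumes A: "finite A" and S: "finite S" and card: "card S < card A" and SI: "S \<subseteq> I"
    and dom: "zdom I Z" and Z: "Z \<noteq> {}"
    and gd: "\<forall>a\<in>A. good Z S (y a)" and zp: "\<forall>a\<in>A. y a \<in> zpoly I"
  shows "\<exists>D u. (\<exists>\<alpha>\<in>PiE A (\<lambda>_. {..D}). u \<alpha> \<noteq> (0::complex)) \<and>
     (\<forall>p\<in>Z. (\<Sum>\<alpha>\<in>PiE A (\<lambda>_. {..D}). u \<alpha> * (\<Prod>a\<in>A. y a p ^ \<alpha> a)) = 0)"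
proof -
  obtain G L c where M: "finite G" "L \<in> zpoly S" "\<exists>p\<in>Z. L p \<noteq> 0"
    "\<forall>k \<alpha>. (\<forall>a\<in>A. \<alpha> a \<le> k) \<longrightarrow> rz Z (\<lambda>p. L p ^ k * (\<Prod>a\<in>A. y a p ^ \<alpha> a)) \<in> Sp Z S (c * (k + 1)) G"
    using multi_good[OF A Z dom SI gd] by blast
  define D where "D = (c + 1) ^ card S * card G"
  define X where "X = PiE A (\<lambda>_. {..D})"
  define h where "h \<alpha> = rz Z (\<lambda>p. L p ^ D * (\<Prod>a\<in>A. y a p ^ \<alpha> a))" for \<alpha>
  have sp: "\<forall>\<alpha>\<in>X. h \<alpha> \<in> fvs.span (gens Z S (c * (D + 1)) G)"
  proof
    fix \<alpha> assume "\<alpha> \<in> X"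
    then have "\<forall>a\<in>A. \<alpha> a \<le> D" unfolding X_def by (auto simp: PiE_def Pi_def)
    then have "h \<alpha> \<in> Sp Z S (c * (D + 1)) G" unfolding h_def using M(4) by blast
    then show "h \<alpha> \<in> fvs.span (gens Z S (c * (D + 1)) G)" unfolding Sp_def .
  qed
  have cX: "card X = (D + 1) ^ card A" unfolding X_def using A by (simp add: card_PiE)
  have "card (gens Z S (c * (D + 1)) G) \<le> (c * (D + 1) + 1) ^ card S * card G"
    by (rule card_gens[OF S M(1)])
  also have "\<dots> < (D + 1) ^ card A" unfolding D_def by (rule count_ineq[OF card])
  finally have ccmp: "card (gens Z S (c * (D + 1)) G) < card X" using cX by simp
  obtain u where u: "\<exists>\<alpha>\<in>X. u \<alpha> \<noteq> 0" "(\<Sum>\<alpha>\<in>X. sc (u \<alpha>) (h \<alpha>)) = 0"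
    using lin_dep[OF _ finite_gens[OF S M(1)] ccmp sp] A unfolding X_def by (auto intro: finite_PiE)
  define P where "P q = (\<Sum>\<alpha>\<in>X. u \<alpha> * (\<Prod>a\<in>A. q a ^ \<alpha> a))" for q :: "'a \<Rightarrow> complex"
  define Pf where "Pf p = (\<Sum>\<alpha>\<in>X. u \<alpha> * (\<Prod>a\<in>A. y a p ^ \<alpha> a))" for p
  have PA: "P \<in> zpoly A" unfolding P_def[abs_def]
    by (intro zpoly_sum zpoly_mult zpoly_const zpoly_prod zpoly_pow zpoly_var) (auto simp: X_def A intro: finite_PiE)
  have PfI: "Pf \<in> zpoly I" unfolding Pf_def[abs_def]
    by (intro zpoly_sum zpoly_mult zpoly_const zpoly_prod zpoly_pow) (use zp in \<open>auto simp: X_def A intro: finite_PiE\<close>)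
  have LD: "(\<lambda>p. L p ^ D) \<in> zpoly I" using M(2) SI zpoly_mono zpoly_pow by blast
  have prodZ: "\<forall>p\<in>Z. L p ^ D * Pf p = 0"
  proof
    fix p assume p: "p \<in> Z"
    have "(\<Sum>\<alpha>\<in>X. sc (u \<alpha>) (h \<alpha>)) p = 0" using u(2) by simp
    then show "L p ^ D * Pf p = 0"
      unfolding sum_fun_apply h_def Pf_def using p by (simp add: rz_def sum_distrib_left algebra_simps)
  qed
  have "(\<forall>p\<in>Z. L p ^ D = 0) \<or> (\<forall>p\<in>Z. Pf p = 0)"
    using dom LD PfI prodZ unfolding zdom_def by blast
  moreover have "\<not> (\<forall>p\<in>Z. L p ^ D = 0)" using M(3) by auto
  ultimately have Pf0: "\<forall>p\<in>Z. Pf p = 0" by blast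
  then show ?thesis using u(1) unfolding Pf_def X_def by blast
qed

lemma counting:
  fixes y :: "'a \<Rightarrow> ('i \<Rightarrow> complex) \<Rightarrow> complex"
  assumes A: "finite A" and S: "finite S" and card: "card S < card A" and SI: "S \<subseteq> I"
    and dom: "zdom I Z" and Z: "Z \<noteq> {}"
    and gd: "\<forall>a\<in>A. good Z S (y a)" and zp: "\<forall>a\<in>A. y a \<in> zpoly I"
  shows "\<exists>P\<in>zpoly A. (\<exists>q. P q \<noteq> 0) \<and> (\<forall>p\<in>Z. P (\<lambda>a. y a p) = 0)"
proof -
  obtain D u where u: "\<exists>\<alpha>\<in>PiE A (\<lambda>_. {..D}). u \<alpha> \<noteq> (0::complex)"
     "\<forall>p\<in>Z. (\<Sum>\<alpha>\<in>PiE A (\<lambda>_. {..D}). u \<alpha> * (\<Prod>a\<in>A. y a p ^ \<alpha> a)) = 0"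
    using counting_explicit[OF assms] by blast
  define X where "X = PiE A (\<lambda>_. {..D})"
  define P where "P q = (\<Sum>\<alpha>\<in>X. u \<alpha> * (\<Prod>a\<in>A. q a ^ \<alpha> a))" for q :: "'a \<Rightarrow> complex"
  have PA: "P \<in> zpoly A" unfolding P_def[abs_def]
    by (intro zpoly_sum zpoly_mult zpoly_const zpoly_prod zpoly_pow zpoly_var) (auto simp: X_def A intro: finite_PiE)
  have "\<exists>q. P q \<noteq> 0"
  proof (rule ccontr)
    assume "\<not> (\<exists>q. P q \<noteq> 0)"
    then have "\<forall>q. (\<Sum>\<alpha>\<in>PiE A (\<lambda>_. {..D}). u \<alpha> * (\<Prod>a\<in>A. q a ^ \<alpha> a)) = 0"
      unfolding P_def X_def by simp
    then have "\<forall>\<alpha>\<in>X. u \<alpha> = 0" using mono_indep[OF A] unfolding X_def by blast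
    then show False using u(1) unfolding X_def by blast
  qed
  moreover have "\<forall>p\<in>Z. P (\<lambda>a. y a p) = 0" using u(2) unfolding P_def X_def by simp
  ultimately show ?thesis using PA by blast
qed


lemma power_fun_apply: "((g :: 'x \<Rightarrow> 'b::comm_ring_1) ^ k) p = g p ^ k"
  by (induction k) auto

lemma poly_fun_apply: "(poly (Q :: ('x \<Rightarrow> 'b::comm_ring_1) poly) g) p = (\<Sum>k\<le>degree Q. coeff Q k p * g p ^ k)"
  unfolding poly_altdef sum_fun_apply by (simp add: power_fun_apply)

lemma dec_zpoly:
  "g \<in> zpoly (insert c S) \<Longrightarrow> \<exists>Q. (\<forall>k. coeff Q k \<in> zpoly S) \<and> g = poly Q (\<lambda>p. p c)"
proof (induction rule: zpoly.induct)
  case (zpoly_const a)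
  show ?case
  proof (intro exI conjI allI)
    show "coeff [:\<lambda>_. a:] k \<in> zpoly S" for k
      by (cases k) (auto intro: zpoly.zpoly_const simp: zero_fun_def)
    show "(\<lambda>_. a) = poly [:\<lambda>_. a:] (\<lambda>p. p c)" by simp
  qed
next
  case (zpoly_var i)
  show ?case
  proof (cases "i = c")
    case True
    show ?thesis
    proof (intro exI conjI allI)
      show "coeff [:0, 1:] k \<in> zpoly S" for k
        by (cases k) (auto intro: zpoly.zpoly_const simp: zero_fun_def one_fun_def coeff_pCons split: nat.splits)
      show "(\<lambda>p. p i :: complex) = poly [:0, 1:] (\<lambda>p. p c)" using True by (simp add: fun_eq_iff)
    qed
  next
    case False
    then have "i \<in> S" using zpoly_var by auto
    show ?thesis
    proof (intro exI conjI allI)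
      show "coeff [:\<lambda>p. p i:] k \<in> zpoly S" for k
        using \<open>i \<in> S\<close> by (cases k) (auto intro: zpoly.zpoly_const zpoly.zpoly_var simp: zero_fun_def)
      show "(\<lambda>p. p i) = poly [:\<lambda>p. p i:] (\<lambda>p. p c)" by simp
    qed
  qed
next
  case (zpoly_add f g)
  then obtain Q1 Q2 where Q: "\<forall>k. coeff Q1 k \<in> zpoly S" "f = poly Q1 (\<lambda>p. p c)"
    "\<forall>k. coeff Q2 k \<in> zpoly S" "g = poly Q2 (\<lambda>p. p c)" by blast
  show ?case
  proof (intro exI conjI allI)
    show "coeff (Q1 + Q2) k \<in> zpoly S" for k
      using Q zpoly.zpoly_add[of "coeff Q1 k" S "coeff Q2 k"] by (simp add: plus_fun_def)
    show "(\<lambda>p. f p + g p) = poly (Q1 + Q2) (\<lambda>p. p c)" using Q by (simp add: fun_eq_iff)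
  qed
next
  case (zpoly_mult f g)
  then obtain Q1 Q2 where Q: "\<forall>k. coeff Q1 k \<in> zpoly S" "f = poly Q1 (\<lambda>p. p c)"
    "\<forall>k. coeff Q2 k \<in> zpoly S" "g = poly Q2 (\<lambda>p. p c)" by blast
  show ?case
  proof (intro exI conjI allI)
    show "coeff (Q1 * Q2) k \<in> zpoly S" for k
    proof -
      have "(\<lambda>p. \<Sum>i\<le>k. coeff Q1 i p * coeff Q2 (k - i) p) \<in> zpoly S"
        by (intro zpoly_sum zpoly.zpoly_mult) (use Q in auto)
      moreover have "coeff (Q1 * Q2) k = (\<lambda>p. \<Sum>i\<le>k. coeff Q1 i p * coeff Q2 (k - i) p)"
        unfolding coeff_mult by (simp add: fun_eq_iff sum_fun_apply)
      ultimately show ?thesis by simp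
    qed
    show "(\<lambda>p. f p * g p) = poly (Q1 * Q2) (\<lambda>p. p c)" using Q by (simp add: fun_eq_iff)
  qed
qed

definition indep :: "('i \<Rightarrow> complex) set \<Rightarrow> 'i set \<Rightarrow> bool" where
  "indep Z S \<longleftrightarrow> (\<forall>g\<in>zpoly S. (\<forall>p\<in>Z. g p = 0) \<longrightarrow> (\<forall>p. g p = 0))"

lemma indep_nz: "indep Z S \<Longrightarrow> L \<in> zpoly S \<Longrightarrow> \<exists>q. L q \<noteq> 0 \<Longrightarrow> \<exists>p\<in>Z. L p \<noteq> 0"
  unfolding indep_def by blast

lemma alg_core:
  assumes dom: "zdom I Z" and fX: "f \<in> zpoly X" and XI: "X \<subseteq> I" and SX: "S \<subseteq> X"
    and fnz: "\<exists>p\<in>Z. f p \<noteq> 0"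
  shows "\<forall>C. (\<forall>i. C i \<in> zpoly S) \<longrightarrow> (\<exists>i\<le>D. \<exists>q. C i q \<noteq> 0) \<longrightarrow> (\<forall>p\<in>Z. (\<Sum>i\<le>D. C i p * f p ^ i) = 0)
    \<longrightarrow> (\<exists>L b. L \<in> zpoly S \<and> (\<exists>q. L q \<noteq> 0) \<and> b \<in> zpoly X \<and> (\<forall>p\<in>Z. L p = f p * b p))"
proof (induction D)
  case 0
  show ?case
  proof (intro allI impI)
    fix C :: "nat \<Rightarrow> ('a \<Rightarrow> complex) \<Rightarrow> complex"
    assume C: "\<forall>i. C i \<in> zpoly S" "\<exists>i\<le>0. \<exists>q. C i q \<noteq> 0" "\<forall>p\<in>Z. (\<Sum>i\<le>0. C i p * f p ^ i) = 0"
    show "\<exists>L b. L \<in> zpoly S \<and> (\<exists>q. L q \<noteq> 0) \<and> b \<in> zpoly X \<and> (\<forall>p\<in>Z. L p = f p * b p)"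
      by (rule exI[of _ "C 0"], rule exI[of _ "\<lambda>_. 0"]) (use C in \<open>auto intro: zpoly_const\<close>)
  qed
next
  case (Suc D)
  show ?case
  proof (intro allI impI)
    fix C :: "nat \<Rightarrow> ('a \<Rightarrow> complex) \<Rightarrow> complex"
    assume C: "\<forall>i. C i \<in> zpoly S" "\<exists>i\<le>Suc D. \<exists>q. C i q \<noteq> 0" "\<forall>p\<in>Z. (\<Sum>i\<le>Suc D. C i p * f p ^ i) = 0"
    define g where "g p = (\<Sum>i\<le>D. C (Suc i) p * f p ^ i)" for p
    have gX: "g \<in> zpoly X" unfolding g_def[abs_def]
    proof (intro zpoly_sum zpoly.zpoly_mult zpoly_pow fX)
      fix i show "C (Suc i) \<in> zpoly X" using C(1) SX zpoly_mono by blast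
    qed simp
    have rel: "\<forall>p\<in>Z. C 0 p + f p * g p = 0"
    proof
      fix p assume "p \<in> Z"
      then have "(\<Sum>i\<le>Suc D. C i p * f p ^ i) = 0" using C(3) by blast
      then show "C 0 p + f p * g p = 0"
        unfolding sum.atMost_Suc_shift g_def by (simp add: sum_distrib_left algebra_simps)
    qed
    show "\<exists>L b. L \<in> zpoly S \<and> (\<exists>q. L q \<noteq> 0) \<and> b \<in> zpoly X \<and> (\<forall>p\<in>Z. L p = f p * b p)"
    proof (cases "\<exists>q. C 0 q \<noteq> 0")
      case True
      show ?thesis
      proof (rule exI[of _ "C 0"], rule exI[of _ "\<lambda>p. 0 - g p"], intro conjI)
        show "C 0 \<in> zpoly S" using C(1) by blast
        show "\<exists>q. C 0 q \<noteq> 0" by (rule True)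
        show "(\<lambda>p. 0 - g p) \<in> zpoly X" by (rule zpoly_minus[OF zpoly_const gX])
        show "\<forall>p\<in>Z. C 0 p = f p * (0 - g p)" using rel by (auto simp: algebra_simps eq_neg_iff_add_eq_0)
      qed
    next
      case False
      then have C0: "\<forall>p. C 0 p = 0" by blast
      have "\<forall>p\<in>Z. f p * g p = 0" using rel C0 by simp
      moreover have "f \<in> zpoly I" "g \<in> zpoly I" using fX gX XI zpoly_mono by auto
      ultimately have "(\<forall>p\<in>Z. f p = 0) \<or> (\<forall>p\<in>Z. g p = 0)" using dom unfolding zdom_def by blast
      then have g0: "\<forall>p\<in>Z. g p = 0" using fnz by blast
      have "\<exists>i\<le>D. \<exists>q. C (Suc i) q \<noteq> 0"
      proof -
        obtain i q where "i \<le> Suc D" "C i q \<noteq> 0" using C(2) by blast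
        moreover have "i \<noteq> 0"
        proof
          assume "i = 0" then show False using C0 \<open>C i q \<noteq> 0\<close> by simp
        qed
        ultimately obtain i' where "i = Suc i'" "i' \<le> D" by (cases i) auto
        then show ?thesis using \<open>C i q \<noteq> 0\<close> by blast
      qed
      moreover have "\<forall>i. C (Suc i) \<in> zpoly S" using C(1) by blast
      moreover have "\<forall>p\<in>Z. (\<Sum>i\<le>D. C (Suc i) p * f p ^ i) = 0" using g0 unfolding g_def by blast
      ultimately show ?thesis using Suc.IH[rule_format, of "\<lambda>i. C (Suc i)"] by blast
    qed
  qed
qed


lemma sum_PiE_insert:
  assumes "a \<notin> B"
  shows "(\<Sum>\<alpha>\<in>PiE (insert a B) (\<lambda>_. {..D::nat}). F \<alpha>) = (\<Sum>i\<le>D. \<Sum>\<beta>\<in>PiE B (\<lambda>_. {..D}). F (\<beta>(a := i)))"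
proof -
  let ?X = "PiE B (\<lambda>_. {..D})"
  let ?m = "\<lambda>(i::nat, \<beta>). \<beta>(a := i)"
  have inj: "inj_on ?m ({..D} \<times> ?X)" using inj_combinator[OF assms, of "\<lambda>_. {..D}"] by simp
  have eqX: "PiE (insert a B) (\<lambda>_. {..D}) = ?m ` ({..D} \<times> ?X)" by (rule PiE_insert_eq)
  have "(\<Sum>\<alpha>\<in>PiE (insert a B) (\<lambda>_. {..D}). F \<alpha>) = (\<Sum>x\<in>{..D} \<times> ?X. F (?m x))"
    unfolding eqX by (rule sum.reindex[OF inj, unfolded comp_def])
  also have "\<dots> = (\<Sum>i\<le>D. \<Sum>\<beta>\<in>?X. F (\<beta>(a := i)))"
    by (simp only: sum.cartesian_product split_def)
  finally show ?thesis .
qed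

lemma prod_upd_insert:
  assumes "a \<notin> B" "finite B"
  shows "(\<Prod>ob\<in>insert a B. w ob ^ (\<beta>(a := i)) ob) = w a ^ i * (\<Prod>ob\<in>B. w ob ^ \<beta> ob)"
proof -
  have "(\<Prod>ob\<in>insert a B. w ob ^ (\<beta>(a := i)) ob) = w a ^ i * (\<Prod>ob\<in>B. w ob ^ (\<beta>(a := i)) ob)"
    using assms by simp
  also have "(\<Prod>ob\<in>B. w ob ^ (\<beta>(a := i)) ob) = (\<Prod>ob\<in>B. w ob ^ \<beta> ob)"
    by (rule prod.cong) (use assms in auto)
  finally show ?thesis .
qed

lemma alg:
  assumes S: "finite S" and SI: "S \<subseteq> I" and dom: "zdom I Z" and Z: "Z \<noteq> {}"
    and fI: "f \<in> zpoly I" and gf: "good Z S f"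
  shows "\<exists>D C. (\<forall>i. C i \<in> zpoly S) \<and> (\<exists>i\<le>D. \<exists>q. C i q \<noteq> 0) \<and> (\<forall>p\<in>Z. (\<Sum>i\<le>D. C i p * f p ^ i) = 0)"
proof -
  define A where "A = insert None (Some ` S)"
  define y where "y ob = (case ob of None \<Rightarrow> f | Some s \<Rightarrow> (\<lambda>p. p s))" for ob
  have nS: "None \<notin> Some ` S" by auto
  have finA: "finite A" unfolding A_def using S by simp
  have cardA: "card A = Suc (card S)" unfolding A_def using S nS by (simp add: card_image)
  have gd: "\<forall>a\<in>A. good Z S (y a)" unfolding A_def y_def using gf good_var[OF Z _ S] by auto
  have zp: "\<forall>a\<in>A. y a \<in> zpoly I" unfolding A_def y_def using fI SI by (auto intro: zpoly.zpoly_var)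
  obtain D u where u: "\<exists>\<alpha>\<in>PiE A (\<lambda>_. {..D}). u \<alpha> \<noteq> (0::complex)"
     "\<forall>p\<in>Z. (\<Sum>\<alpha>\<in>PiE A (\<lambda>_. {..D}). u \<alpha> * (\<Prod>a\<in>A. y a p ^ \<alpha> a)) = 0"
    using counting_explicit[OF finA S _ SI dom Z gd zp] cardA by auto
  let ?Y = "PiE (Some ` S) (\<lambda>_. {..D})"
  define C where "C i p = (\<Sum>\<beta>\<in>?Y. u (\<beta>(None := i)) * (\<Prod>s\<in>S. p s ^ \<beta> (Some s)))" for i p
  have prodS: "(\<Prod>ob\<in>Some ` S. w ob ^ \<beta> ob) = (\<Prod>s\<in>S. w (Some s) ^ \<beta> (Some s))" for w :: "'a option \<Rightarrow> complex" and \<beta>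
    by (simp add: prod.reindex)
  have sumeq: "(\<Sum>\<alpha>\<in>PiE A (\<lambda>_. {..D}). u \<alpha> * (\<Prod>a\<in>A. y a p ^ \<alpha> a)) = (\<Sum>i\<le>D. C i p * f p ^ i)" for p
  proof -
    have "(\<Sum>\<alpha>\<in>PiE A (\<lambda>_. {..D}). u \<alpha> * (\<Prod>a\<in>A. y a p ^ \<alpha> a))
      = (\<Sum>i\<le>D. \<Sum>\<beta>\<in>?Y. u (\<beta>(None := i)) * (\<Prod>a\<in>A. y a p ^ (\<beta>(None := i)) a))"
      unfolding A_def by (rule sum_PiE_insert[OF nS])
    also have "\<dots> = (\<Sum>i\<le>D. \<Sum>\<beta>\<in>?Y. u (\<beta>(None := i)) * (f p ^ i * (\<Prod>s\<in>S. p s ^ \<beta> (Some s))))"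
    proof (intro sum.cong refl arg_cong2[where f="(*)"])
      fix i \<beta>
      have "(\<Prod>a\<in>A. y a p ^ (\<beta>(None := i)) a) = y None p ^ i * (\<Prod>ob\<in>Some ` S. y ob p ^ \<beta> ob)"
        unfolding A_def by (rule prod_upd_insert[OF nS]) (use S in simp)
      also have "\<dots> = f p ^ i * (\<Prod>s\<in>S. p s ^ \<beta> (Some s))"
        unfolding prodS by (simp add: y_def)
      finally show "(\<Prod>a\<in>A. y a p ^ (\<beta>(None := i)) a) = f p ^ i * (\<Prod>s\<in>S. p s ^ \<beta> (Some s))" .
    qed
    also have "\<dots> = (\<Sum>i\<le>D. C i p * f p ^ i)"
      unfolding C_def by (intro sum.cong refl) (simp add: sum_distrib_left sum_distrib_right algebra_simps)
    finally show ?thesis .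
  qed
  have CS: "\<forall>i. C i \<in> zpoly S"
  proof
    fix i show "C i \<in> zpoly S" unfolding C_def[abs_def]
      by (intro zpoly_sum zpoly.zpoly_mult zpoly.zpoly_const zpoly_prod zpoly_pow zpoly.zpoly_var)
        (auto simp: S intro: finite_PiE)
  qed
  obtain \<alpha>0 where a0: "\<alpha>0 \<in> PiE A (\<lambda>_. {..D})" "u \<alpha>0 \<noteq> 0" using u(1) by blast
  then obtain i0 \<beta>0 where ib: "i0 \<le> D" "\<beta>0 \<in> ?Y" "\<alpha>0 = \<beta>0(None := i0)"
    unfolding A_def PiE_insert_eq by auto
  have "\<exists>q. C i0 q \<noteq> 0"
  proof (rule ccontr)
    assume "\<not> (\<exists>q. C i0 q \<noteq> 0)"
    then have "\<forall>q'. (\<Sum>\<beta>\<in>?Y. u (\<beta>(None := i0)) * (\<Prod>ob\<in>Some ` S. q' ob ^ \<beta> ob)) = 0"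
      unfolding prodS by (auto simp: C_def)
    then have "\<forall>\<beta>\<in>?Y. u (\<beta>(None := i0)) = 0"
      using mono_indep[of "Some ` S" "\<lambda>\<beta>. u (\<beta>(None := i0))" D] S by auto
    then show False using ib a0 by blast
  qed
  then show ?thesis using CS ib(1) u(2) sumeq by auto
qed

lemma zpoly_neg: "f \<in> zpoly X \<Longrightarrow> (\<lambda>p. - f p) \<in> zpoly X"
  using zpoly_minus[OF zpoly.zpoly_const[of 0]] by simp

lemma alg2:
  assumes S: "finite S" and SX: "S \<subseteq> X" and XI: "X \<subseteq> I" and dom: "zdom I Z" and Z: "Z \<noteq> {}"
    and fX: "f \<in> zpoly X" and gf: "good Z S f" and fnz: "\<exists>p\<in>Z. f p \<noteq> 0"
  shows "\<exists>L b. L \<in> zpoly S \<and> (\<exists>q. L q \<noteq> 0) \<and> b \<in> zpoly X \<and> (\<forall>p\<in>Z. L p = f p * b p)"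
proof -
  have fI: "f \<in> zpoly I" using fX XI zpoly_mono by blast
  obtain D C where DC: "\<forall>i. C i \<in> zpoly S" "\<exists>i\<le>D. \<exists>q. C i q \<noteq> 0" "\<forall>p\<in>Z. (\<Sum>i\<le>D. C i p * f p ^ i) = 0"
    using alg[OF S _ dom Z fI gf] SX XI by blast
  show ?thesis using alg_core[OF dom fX XI SX fnz, of D] DC by blast
qed

lemma coord_good:
  assumes S: "finite S" and ind: "indep Z S" and g: "g \<in> zpoly (insert c S)"
    and gnz: "\<exists>q. g q \<noteq> 0" and gZ: "\<forall>p\<in>Z. g p = 0"
  shows "good Z S (\<lambda>p. p c)"
proof -
  obtain Q where Q: "\<forall>k. coeff Q k \<in> zpoly S" "g = poly Q (\<lambda>p. p c)" using dec_zpoly[OF g] by blast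
  define N where "N = degree Q"
  have gp: "g p = (\<Sum>k\<le>N. coeff Q k p * p c ^ k)" for p
    unfolding N_def Q(2) poly_fun_apply by simp
  define K where "K = {k. k \<le> N \<and> (\<exists>q. coeff Q k q \<noteq> 0)}"
  have finK: "finite K" unfolding K_def by simp
  have neK: "K \<noteq> {}"
  proof
    assume "K = {}"
    then have "\<forall>k\<le>N. \<forall>q. coeff Q k q = 0" unfolding K_def by blast
    then have "\<forall>q. g q = 0" unfolding gp by simp
    then show False using gnz by blast
  qed
  define e where "e = Max K"
  have eK: "e \<in> K" unfolding e_def using finK neK by simp
  have above: "\<forall>k. e < k \<longrightarrow> k \<le> N \<longrightarrow> (\<forall>q. coeff Q k q = 0)"
  proof (intro allI impI)
    fix k q assume k: "e < k" "k \<le> N"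
    show "coeff Q k q = 0"
    proof (rule ccontr)
      assume "coeff Q k q \<noteq> 0"
      then have "k \<in> K" unfolding K_def using k by blast
      then have "k \<le> e" unfolding e_def using Max_ge[OF finK] by blast
      then show False using k by simp
    qed
  qed
  have eN: "e \<le> N" using eK unfolding K_def by blast
  have gp2: "g p = (\<Sum>k\<le>e. coeff Q k p * p c ^ k)" for p
  proof -
    have "g p = (\<Sum>k\<le>N. coeff Q k p * p c ^ k)" by (rule gp)
    also have "\<dots> = (\<Sum>k\<le>e. coeff Q k p * p c ^ k)"
      by (rule sum.mono_neutral_right) (use eN above in auto)
    finally show ?thesis .
  qed
  have rel: "\<forall>p\<in>Z. coeff Q e p * p c ^ e = (\<Sum>k<e. (\<lambda>p. 0 - coeff Q k p) p * p c ^ k)"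
  proof
    fix p assume "p \<in> Z"
    then have "(\<Sum>k\<le>e. coeff Q k p * p c ^ k) = 0" using gZ gp2 by simp
    then have "(\<Sum>k<e. coeff Q k p * p c ^ k) + coeff Q e p * p c ^ e = 0"
      by (simp add: lessThan_Suc_atMost[symmetric])
    then show "coeff Q e p * p c ^ e = (\<Sum>k<e. (\<lambda>p. 0 - coeff Q k p) p * p c ^ k)"
      by (simp add: sum_negf eq_neg_iff_add_eq_0 add.commute)
  qed
  have Lnz: "\<exists>p\<in>Z. coeff Q e p \<noteq> 0"
    by (rule indep_nz[OF ind]) (use Q(1) eK in \<open>auto simp: K_def\<close>)
  show ?thesis
    by (rule good_rel5[OF S _ Lnz _ rel]) (use Q(1) in \<open>auto intro: zpoly_neg\<close>)
qed

lemma indep_mono: "indep Z S \<Longrightarrow> Z \<subseteq> Z' \<Longrightarrow> indep Z' S"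
  unfolding indep_def by blast

lemma strict_step:
  assumes I: "finite I" and Zi: "zirreducible I Z" and Z'i: "zirreducible I Z'"
    and sub: "Z \<subseteq> Z'" and ne: "Z \<noteq> Z'" and SI: "S \<subseteq> I" and ind: "indep Z S"
  shows "\<exists>c\<in>I - S. indep Z' (insert c S)"
proof (rule ccontr)
  assume H: "\<not> (\<exists>c\<in>I - S. indep Z' (insert c S))"
  have S: "finite S" using I SI finite_subset by blast
  have dom: "zdom I Z'" by (rule zirr_dom[OF Z'i])
  have Z'ne: "Z' \<noteq> {}" using Z'i unfolding zirreducible_def by blast
  have ind': "indep Z' S" by (rule indep_mono[OF ind sub])
  have allgood: "\<forall>c\<in>I. good Z' S (\<lambda>p. p c)"
  proof
    fix c assume c: "c \<in> I"
    show "good Z' S (\<lambda>p. p c)"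
    proof (cases "c \<in> S")
      case True then show ?thesis using good_var[OF Z'ne True S] by simp
    next
      case False
      then have "\<not> indep Z' (insert c S)" using H c by blast
      then obtain g where g: "g \<in> zpoly (insert c S)" "\<forall>p\<in>Z'. g p = 0" "\<exists>q. g q \<noteq> 0"
        unfolding indep_def by blast
      show ?thesis by (rule coord_good[OF S ind' g(1) g(3) g(2)])
    qed
  qed
  obtain F where F: "F \<subseteq> zpoly I" "Z = {p \<in> cspace I. \<forall>f\<in>F. f p = 0}"
    using Zi unfolding zirreducible_def zclosed_def by blast
  have Z'c: "Z' \<subseteq> cspace I" using Z'i zclosed_sub unfolding zirreducible_def by blast
  obtain p0 where p0: "p0 \<in> Z'" "p0 \<notin> Z" using sub ne by blast
  then obtain f where f: "f \<in> F" "f p0 \<noteq> 0" using F(2) Z'c by blast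
  have fI: "f \<in> zpoly I" using f F by blast
  have fZ: "\<forall>p\<in>Z. f p = 0" using f F by blast
  have gf: "good Z' S f" by (rule good_zpoly[OF fI Z'ne dom SI]) (use allgood in blast)
  obtain L b where Lb: "L \<in> zpoly S" "\<exists>q. L q \<noteq> 0" "b \<in> zpoly I" "\<forall>p\<in>Z'. L p = f p * b p"
    using alg2[OF S SI order_refl dom Z'ne fI gf] p0 f by blast
  have "\<forall>p\<in>Z. L p = 0" using Lb(4) fZ sub by auto
  then have "\<forall>p. L p = 0" using ind Lb(1) unfolding indep_def by blast
  then show False using Lb(2) by blast
qed

lemma indep_card_bound:
  assumes I: "finite I" and TI: "T \<subseteq> I" and dom: "zdom I V" and V: "V \<noteq> {}"
    and gd: "\<forall>c\<in>I. good V T (\<lambda>p. p c)" and SI: "S \<subseteq> I" and ind: "indep V S"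
  shows "card S \<le> card T"
proof (rule ccontr)
  assume "\<not> card S \<le> card T"
  then have lt: "card T < card S" by simp
  have S: "finite S" "finite T" using I SI TI finite_subset by blast+
  obtain P where P: "P \<in> zpoly S" "\<exists>q. P q \<noteq> 0" "\<forall>p\<in>V. P (\<lambda>a. p a) = 0"
    using counting[OF S(1) S(2) lt TI dom V, of "\<lambda>a p. p a"] gd SI by (auto intro: zpoly.zpoly_var)
  have "\<forall>p. P p = 0" using ind P(1) P(3) unfolding indep_def by auto
  then show False using P(2) by blast
qed

lemma indep_empty: "Z \<noteq> {} \<Longrightarrow> indep Z {}"
  unfolding indep_def
proof (intro ballI impI allI)
  fix g :: "('a \<Rightarrow> complex) \<Rightarrow> complex" and p
  assume "Z \<noteq> {}" "g \<in> zpoly {}" "\<forall>p\<in>Z. g p = 0"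
  then obtain z where "z \<in> Z" by blast
  have "g p = g z" by (rule zpoly_agree[OF \<open>g \<in> zpoly {}\<close>]) simp
  then show "g p = 0" using \<open>z \<in> Z\<close> \<open>\<forall>p\<in>Z. g p = 0\<close> by simp
qed

lemma chain_bound:
  assumes I: "finite I" and ch: "zchain I V k"
    and bound: "\<forall>S. S \<subseteq> I \<longrightarrow> indep V S \<longrightarrow> card S \<le> n"
  shows "k \<le> n"
proof -
  obtain Z where Z: "\<forall>i\<le>k. zirreducible I (Z i) \<and> Z i \<subseteq> V" "\<forall>i<k. Z i \<subset> Z (Suc i)"
    using ch unfolding zchain_def by blast
  have "\<forall>i\<le>k. \<exists>S\<subseteq>I. indep (Z i) S \<and> card S \<ge> i"
  proof (intro allI impI)
    fix i assume "i \<le> k"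
    then show "\<exists>S\<subseteq>I. indep (Z i) S \<and> card S \<ge> i"
    proof (induction i)
      case 0
      have "Z 0 \<noteq> {}" using Z(1) unfolding zirreducible_def by auto
      then show ?case using indep_empty by blast
    next
      case (Suc i)
      then obtain S where S: "S \<subseteq> I" "indep (Z i) S" "card S \<ge> i" by auto
      have ss: "Z i \<subset> Z (Suc i)" using Z(2) Suc.prems by simp
      have "\<exists>c\<in>I - S. indep (Z (Suc i)) (insert c S)"
        by (rule strict_step[OF I _ _ _ _ S(1) S(2)]) (use Z(1) Suc.prems ss in auto)
      then obtain c where c: "c \<in> I - S" "indep (Z (Suc i)) (insert c S)" by blast
      have "finite S" using I S(1) finite_subset by blast
      then have "card (insert c S) = Suc (card S)" using c(1) by simp
      then show ?case using c S by (intro exI[of _ "insert c S"]) auto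
    qed
  qed
  then obtain S where S: "S \<subseteq> I" "indep (Z k) S" "card S \<ge> k" by blast
  have "indep V S" using indep_mono[OF S(2)] Z(1) by blast
  then have "card S \<le> n" using bound S(1) by blast
  then show ?thesis using S(3) by simp
qed


lemma psi_Inl [simp]: "psi m \<delta> t (Inl k) = t $ k" unfolding psi_def by simp
lemma psi_Inr [simp]: "psi m \<delta> t (Inr i) = (if i < m then \<delta> i t else 0)" unfolding psi_def by simp

lemma finite_tower_idx: "finite (tower_idx m :: ('n::finite + nat) set)"
  unfolding tower_idx_def by simp

lemma psi_cspace: "psi m \<delta> t \<in> cspace (tower_idx m)"
  unfolding cspace_def tower_idx_def
proof (intro CollectI allI impI)
  fix i :: "'a + nat" assume "i \<notin> range Inl \<union> Inr ` {..<m}"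
  then show "psi m \<delta> t i = 0" by (cases i) auto
qed

lemma sh_psi:
  assumes "\<forall>i<m. mholo_on U (\<delta> i)" "c \<in> tower_idx m"
  shows "sh U (\<lambda>t. psi m \<delta> t c)"
proof -
  from assms(2) consider k where "c = Inl k" | i where "c = Inr i" "i < m" unfolding tower_idx_def by auto
  then show ?thesis
  proof cases
    case 1 then show ?thesis by (simp add: sh_coord)
  next
    case 2 then show ?thesis using assms(1) unfolding mholo_on_def sh_def by simp
  qed
qed

lemma sh_comp:
  assumes "\<forall>i<m. mholo_on U (\<delta> i)" "g \<in> zpoly (tower_idx m)"
  shows "sh U (\<lambda>t. g (psi m \<delta> t))"
  by (rule sh_zpoly[OF assms(2)]) (use sh_psi[OF assms(1)] in auto)

lemma dom_psiU:
  assumes U: "open U" "connected U" and H: "\<forall>i<m. mholo_on U (\<delta> i)"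
  shows "zdom (tower_idx m) (psi m \<delta> ` U)"
  unfolding zdom_def
proof (intro allI impI)
  fix g h assume g: "g \<in> zpoly (tower_idx m)" and h: "h \<in> zpoly (tower_idx m)"
    and gh: "\<forall>p\<in>psi m \<delta> ` U. g p * h p = 0"
  have "(\<forall>t\<in>U. g (psi m \<delta> t) = 0) \<or> (\<forall>t\<in>U. h (psi m \<delta> t) = 0)"
    by (rule dom_U[OF U sh_comp[OF H g] sh_comp[OF H h]]) (use gh in auto)
  then show "(\<forall>p\<in>psi m \<delta> ` U. g p = 0) \<or> (\<forall>p\<in>psi m \<delta> ` U. h p = 0)" by auto
qed

lemma dom_psiW:
  assumes U: "open U" and PDU: "PD a r \<subseteq> U" and r: "r > 0" and H: "\<forall>i<m. mholo_on U (\<delta> i)"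
  shows "zdom (tower_idx m) (psi m \<delta> ` WS a r a J)"
  unfolding zdom_def
proof (intro allI impI)
  fix g h assume g: "g \<in> zpoly (tower_idx m)" and h: "h \<in> zpoly (tower_idx m)"
    and gh: "\<forall>p\<in>psi m \<delta> ` WS a r a J. g p * h p = 0"
  have "(\<forall>t\<in>WS a r a J. g (psi m \<delta> t) = 0) \<or> (\<forall>t\<in>WS a r a J. h (psi m \<delta> t) = 0)"
    by (rule dom_W[OF U PDU r sh_comp[OF H g] sh_comp[OF H h]]) (use gh in auto)
  then show "(\<forall>p\<in>psi m \<delta> ` WS a r a J. g p = 0) \<or> (\<forall>p\<in>psi m \<delta> ` WS a r a J. h p = 0)" by auto
qed

lemma irr_psi:
  assumes "A \<noteq> {}" "zdom (tower_idx m) (psi m \<delta> ` A)"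
  shows "zirreducible (tower_idx m) (zclosure (tower_idx m) (psi m \<delta> ` A))"
  by (rule dom_irr) (use assms psi_cspace in auto)


lemma tower_idx_0: "tower_idx 0 = range Inl" unfolding tower_idx_def by simp
lemma tower_idx_Suc: "tower_idx (Suc i) = insert (Inr i) (tower_idx i)"
  unfolding tower_idx_def by (auto simp: lessThan_Suc)
lemma tower_idx_mono: "i \<le> j \<Longrightarrow> tower_idx i \<subseteq> tower_idx j"
  unfolding tower_idx_def by auto

lemma indep_T:
  fixes U :: "(complex ^ 'n) set"
  assumes U: "open U" "U \<noteq> {}"
  shows "indep (zclosure (tower_idx m) (psi m \<delta> ` U)) (range Inl)"
  unfolding indep_def
proof (intro ballI impI allI)
  fix g :: "('n + nat \<Rightarrow> complex) \<Rightarrow> complex" and p :: "'n + nat \<Rightarrow> complex"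
  assume g: "g \<in> zpoly (range Inl)" and gV: "\<forall>p\<in>zclosure (tower_idx m) (psi m \<delta> ` U). g p = 0"
  have gU: "\<forall>t\<in>U. g (psi m \<delta> t) = 0" using gV zclosure_sup by blast
  define \<phi> where "\<phi> t = (\<lambda>c::'n + nat. case c of Inl k \<Rightarrow> t $ k | Inr _ \<Rightarrow> 0)" for t :: "complex ^ 'n"
  define G where "G t = g (\<phi> t)" for t
  have Gpsi: "G t = g (psi m \<delta> t)" for t
    unfolding G_def by (rule zpoly_agree[OF g]) (auto simp: \<phi>_def)
  have shG: "sh UNIV G" unfolding G_def
    by (rule sh_zpoly[OF g]) (auto simp: \<phi>_def sh_coord)
  obtain a where a: "a \<in> U" using U(2) by blast
  obtain \<epsilon> where \<epsilon>: "\<epsilon> > 0" "ball a \<epsilon> \<subseteq> U" using U(1) a open_contains_ball by blast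
  have G0: "\<forall>s\<in>ball a \<epsilon>. G s = 0" using \<epsilon> gU Gpsi by auto
  define tp :: "complex ^ 'n" where "tp = (\<chi> k. p (Inl k))"
  define R :: real where "R = (\<Sum>j\<in>UNIV. dist (a $ j) (tp $ j)) + 1"
  have R: "R > 0" unfolding R_def by (simp add: add_nonneg_pos sum_nonneg)
  have tpR: "tp \<in> PD a R"
    unfolding PD_def R_def
  proof (intro CollectI allI)
    fix j
    have "dist (a $ j) (tp $ j) \<le> (\<Sum>j\<in>UNIV. dist (a $ j) (tp $ j))"
      by (rule member_le_sum) auto
    then show "dist (a $ j) (tp $ j) < (\<Sum>j\<in>UNIV. dist (a $ j) (tp $ j)) + 1" by simp
  qed
  have aR: "a \<in> PD a R" using R unfolding PD_def by simp
  have "\<forall>t\<in>PD a R. G t = 0"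
    by (rule zero_near_PD[of a R UNIV G a \<epsilon>]) (use shG aR \<epsilon> G0 R in \<open>auto simp: sh_def\<close>)
  then have "G tp = 0" using tpR by blast
  moreover have "G tp = g p" unfolding G_def
    by (rule zpoly_agree[OF g]) (auto simp: \<phi>_def tp_def)
  ultimately show "g p = 0" by simp
qed


lemma good_coords:
  fixes U :: "(complex ^ 'n) set"
    and m :: nat
    and e :: "nat \<Rightarrow> nat"
    and \<alpha>N \<alpha>D :: "nat \<Rightarrow> ('n + nat \<Rightarrow> complex) \<Rightarrow> complex"
    and \<delta> :: "nat \<Rightarrow> complex ^ 'n \<Rightarrow> complex"
  assumes U: "open U" "connected U" "U \<noteq> {}"
    and tower_exps: "\<forall>i<m. e i \<ge> 1"
    and tower_alpha_poly: "\<forall>i<m. \<alpha>N i \<in> zpoly (tower_idx i) \<and> \<alpha>D i \<in> zpoly (tower_idx i)"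
    and tower_alpha_den: "\<forall>i<m. \<forall>t\<in>U. \<alpha>D i (psi m \<delta> t) \<noteq> 0"
    and tower_rel: "\<forall>i<m. \<forall>t\<in>U. (\<delta> i t) ^ (e i) = \<alpha>N i (psi m \<delta> t) / \<alpha>D i (psi m \<delta> t)"
    and tower_holo: "\<forall>i<m. mholo_on U (\<delta> i)"
  defines "V \<equiv> zclosure (tower_idx m) (psi m \<delta> ` U)"
  shows "\<forall>c\<in>tower_idx m. good V (range Inl) (\<lambda>p. p c)"
proof -
  let ?I = "tower_idx m :: ('n + nat) set"
  let ?T = "range Inl :: ('n + nat) set"
  have Ac: "psi m \<delta> ` U \<subseteq> cspace ?I" using psi_cspace by blast
  have dom: "zdom ?I V" unfolding V_def by (rule zirr_dom[OF irr_psi[OF U(3) dom_psiU[OF U(1,2) tower_holo]]])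
  have Vne: "V \<noteq> {}" unfolding V_def using U(3) zclosure_sup by blast
  have indT: "indep V ?T" unfolding V_def by (rule indep_T[OF U(1,3)])
  have finT: "finite ?T" by simp
  have TI: "?T \<subseteq> ?I" unfolding tower_idx_def by auto
  have sub: "psi m \<delta> ` U \<subseteq> V" unfolding V_def by (rule zclosure_sup)
  have claim: "i \<le> m \<Longrightarrow> \<forall>c\<in>tower_idx i. good V ?T (\<lambda>p. p c)" for i
  proof (induction i)
    case 0
    show ?case unfolding tower_idx_0 using good_var[OF Vne _ finT] by blast
  next
    case (Suc i)
    then have im: "i < m" by simp
    have IH: "\<forall>c\<in>tower_idx i. good V ?T (\<lambda>p. p c)" using Suc by simp
    have TIi: "?T \<subseteq> tower_idx i" unfolding tower_idx_def by auto
    have IiI: "tower_idx i \<subseteq> ?I" using tower_idx_mono[of i m] im by simp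
    have aD: "\<alpha>D i \<in> zpoly (tower_idx i)" and aN: "\<alpha>N i \<in> zpoly (tower_idx i)" using tower_alpha_poly im by auto
    have gaD: "good V ?T (\<alpha>D i)" by (rule good_zpoly[OF aD Vne dom TI]) (use IH in blast)
    obtain t0 where t0: "t0 \<in> U" using U(3) by blast
    have aDnz: "\<exists>p\<in>V. \<alpha>D i p \<noteq> 0" using t0 sub tower_alpha_den im by blast
    obtain L b where Lb: "L \<in> zpoly ?T" "\<exists>q. L q \<noteq> 0" "b \<in> zpoly (tower_idx i)" "\<forall>p\<in>V. L p = \<alpha>D i p * b p"
      using alg2[OF finT TIi IiI dom Vne aD gaD aDnz] by blast
    have relV: "\<forall>p\<in>V. p (Inr i) ^ e i * \<alpha>D i p - \<alpha>N i p = 0"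
    proof
      fix p assume pV: "p \<in> V"
      show "p (Inr i) ^ e i * \<alpha>D i p - \<alpha>N i p = 0"
      proof (rule zclosure_vanish[OF Ac _ _ pV[unfolded V_def]])
        show "(\<lambda>p. p (Inr i) ^ e i * \<alpha>D i p - \<alpha>N i p) \<in> zpoly ?I"
          using aD aN IiI im by (intro zpoly_minus zpoly.zpoly_mult zpoly_pow zpoly.zpoly_var)
            (auto intro: zpoly_mono simp: tower_idx_def)
        show "\<forall>q\<in>psi m \<delta> ` U. q (Inr i) ^ e i * \<alpha>D i q - \<alpha>N i q = 0"
        proof
          fix q assume "q \<in> psi m \<delta> ` U"
          then obtain t where t: "t \<in> U" "q = psi m \<delta> t" by blast
          have "\<delta> i t ^ e i = \<alpha>N i q / \<alpha>D i q" using tower_rel im t by simp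
          moreover have "\<alpha>D i q \<noteq> 0" using tower_alpha_den im t by simp
          ultimately show "q (Inr i) ^ e i * \<alpha>D i q - \<alpha>N i q = 0" using t im by (simp add: field_simps)
        qed
      qed
    qed
    have rel: "\<forall>p\<in>V. L p * p (Inr i) ^ e i = b p * \<alpha>N i p"
    proof
      fix p assume pV: "p \<in> V"
      have "L p * p (Inr i) ^ e i = b p * (p (Inr i) ^ e i * \<alpha>D i p)" using Lb(4) pV by (simp add: algebra_simps)
      also have "\<dots> = b p * \<alpha>N i p" using relV pV by simp
      finally show "L p * p (Inr i) ^ e i = b p * \<alpha>N i p" .
    qed
    have gy: "good V ?T (\<lambda>p. b p * \<alpha>N i p)"
      by (rule good_zpoly[OF zpoly.zpoly_mult[OF Lb(3) aN] Vne dom TI]) (use IH in blast)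
    have Lnz: "\<exists>p\<in>V. L p \<noteq> 0" by (rule indep_nz[OF indT Lb(1,2)])
    have "good V ?T (\<lambda>p. p (Inr i))"
      by (rule good_rel4[OF finT dom TI Lb(1) Lnz gy _ rel]) (use tower_exps im in simp)
    then show ?case unfolding tower_idx_Suc using IH by blast
  qed
  show ?thesis using claim[of m] by simp
qed


lemma WS_mono: "r > 0 \<Longrightarrow> J \<subseteq> J' \<Longrightarrow> WS a r a J \<subseteq> WS a r a J'"
proof
  fix x assume r: "r > 0" and JJ: "J \<subseteq> J'" and x: "x \<in> WS a r a J"
  have "dist (a $ j) (x $ j) < r" if "j \<in> J'" for j
  proof (cases "j \<in> J")
    case True then show ?thesis using x unfolding WS_def by blast
  next
    case False then have "x $ j = a $ j" using x unfolding WS_def by blast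
    then show ?thesis using r by simp
  qed
  moreover have "x $ j = a $ j" if "j \<notin> J'" for j using that JJ x unfolding WS_def by blast
  ultimately show "x \<in> WS a r a J'" unfolding WS_def by blast
qed

lemma lower_chain:
  fixes U :: "(complex ^ 'n) set"
  assumes U: "open U" "U \<noteq> {}" and H: "\<forall>i<m. mholo_on U (\<delta> i)"
  shows "zchain (tower_idx m) (zclosure (tower_idx m) (psi m \<delta> ` U)) CARD('n)"
proof -
  let ?I = "tower_idx m :: ('n + nat) set"
  obtain a where a: "a \<in> U" using U(2) by blast
  obtain r where r: "r > 0" "PD a r \<subseteq> U" using PD_sub_open[OF U(1) a] by blast
  obtain h where h: "bij_betw h (UNIV :: 'n set) {0..<card (UNIV :: 'n set)}"
    using ex_bij_betw_finite_nat[of "UNIV :: 'n set"] by auto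
  define J where "J k = {j. h j < k}" for k
  define Zc where "Zc k = zclosure ?I (psi m \<delta> ` WS a r a (J k))" for k
  have aPD: "a \<in> PD a r" using r unfolding PD_def by simp
  have aW: "a \<in> WS a r a K" for K using r unfolding WS_def by simp
  show ?thesis unfolding zchain_def
  proof (rule exI[of _ Zc], intro conjI allI impI)
    fix i assume "i \<le> CARD('n)"
    show "zirreducible ?I (Zc i)"
      unfolding Zc_def by (rule irr_psi) (use aW dom_psiW[OF U(1) r(2) r(1) H] in auto)
    show "Zc i \<subseteq> zclosure ?I (psi m \<delta> ` U)"
      unfolding Zc_def by (rule zclosure_mono) (use WS_PD[OF aPD] r(2) in blast)
  next
    fix i assume i: "i < CARD('n)"
    have sub: "Zc i \<subseteq> Zc (Suc i)" unfolding Zc_def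
      by (intro zclosure_mono image_mono WS_mono r(1)) (auto simp: J_def)
    obtain j0 where j0: "h j0 = i" using h i unfolding bij_betw_def by (metis atLeastLessThan_iff imageE le0)
    define g where "g p = p (Inl j0) - a $ j0" for p :: "'n + nat \<Rightarrow> complex"
    have gI: "g \<in> zpoly ?I" unfolding g_def[abs_def]
      by (intro zpoly_minus zpoly.zpoly_var zpoly.zpoly_const) (auto simp: tower_idx_def)
    have van: "\<forall>p\<in>Zc i. g p = 0"
    proof
      fix p assume p: "p \<in> Zc i"
      show "g p = 0"
      proof (rule zclosure_vanish[OF _ gI _ p[unfolded Zc_def]])
        show "psi m \<delta> ` WS a r a (J i) \<subseteq> cspace ?I" using psi_cspace by blast
        show "\<forall>p\<in>psi m \<delta> ` WS a r a (J i). g p = 0"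
          using j0 unfolding g_def WS_def J_def by auto
      qed
    qed
    define t1 where "t1 = vupd a j0 (a $ j0 + of_real (r / 2))"
    have t1W: "t1 \<in> WS a r a (J (Suc i))"
      unfolding WS_def J_def t1_def using r(1) j0 by (auto simp: dist_norm)
    have "psi m \<delta> t1 \<in> Zc (Suc i)" unfolding Zc_def using t1W zclosure_sup by blast
    moreover have "g (psi m \<delta> t1) \<noteq> 0" unfolding g_def t1_def using r(1) by simp
    ultimately have "Zc (Suc i) \<noteq> Zc i" using van by blast
    then show "Zc i \<subset> Zc (Suc i)" using sub by blast
  qed
qed

lemma phi_cspace:
  fixes t :: "complex ^ 'n"
  shows "phi m r \<delta> xN xD t \<in> cspace (inc_idx m r)"
  unfolding cspace_def
proof (intro CollectI allI impI)
  fix c :: "('n + nat) + nat" assume c: "c \<notin> inc_idx m r"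
  show "phi m r \<delta> xN xD t c = 0"
  proof (cases c)
    case (Inl a)
    then have "a \<notin> tower_idx m" using c unfolding inc_idx_def by auto
    then show ?thesis using Inl psi_cspace[of m \<delta> t] unfolding phi_def cspace_def by auto
  next
    case (Inr j)
    then have "\<not> j < r" using c unfolding inc_idx_def by auto
    then show ?thesis using Inr unfolding phi_def by auto
  qed
qed

lemma pistar_phi: "pistar (phi m r \<delta> xN xD t) = psi m \<delta> t"
  unfolding pistar_def phi_def by simp

lemma closure_eq:
  fixes U :: "(complex ^ 'n) set"
  shows "zclosure (tower_idx m) (psi m \<delta> ` U)
           = zclosure (tower_idx m) (pistar ` zclosure (inc_idx m r) (phi m r \<delta> xN xD ` U))"
proof
  let ?I = "tower_idx m :: ('n + nat) set"
  let ?A = "psi m \<delta> ` U"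
  let ?B = "phi m r \<delta> xN xD ` U"
  show "zclosure ?I ?A \<subseteq> zclosure ?I (pistar ` zclosure (inc_idx m r) ?B)"
  proof (rule zclosure_mono)
    show "?A \<subseteq> pistar ` zclosure (inc_idx m r) ?B"
    proof
      fix q assume "q \<in> ?A"
      then obtain t where t: "t \<in> U" "q = psi m \<delta> t" by blast
      have "phi m r \<delta> xN xD t \<in> zclosure (inc_idx m r) ?B" using t zclosure_sup by blast
      then show "q \<in> pistar ` zclosure (inc_idx m r) ?B" using t pistar_phi by (metis image_eqI)
    qed
  qed
  have Ac: "?A \<subseteq> cspace ?I" using psi_cspace by blast
  have clA: "zclosed ?I (zclosure ?I ?A)" by (rule zclosure_closed[OF Ac])
  obtain F where F: "F \<subseteq> zpoly ?I" "zclosure ?I ?A = {q \<in> cspace ?I. \<forall>f\<in>F. f q = 0}"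
    using clA unfolding zclosed_def by blast
  define F' where "F' = (\<lambda>f p. f (pistar p)) ` F"
  have F': "F' \<subseteq> zpoly (inc_idx m r)"
  proof
    fix f' assume "f' \<in> F'"
    then obtain f where f: "f \<in> F" "f' = (\<lambda>p. f (pistar p))" unfolding F'_def by blast
    have "(\<lambda>p. f (\<lambda>i. (\<lambda>c p. p (Inl c)) i p)) \<in> zpoly (inc_idx m r)"
      by (rule zpoly_comp) (use f F in \<open>auto intro: zpoly.zpoly_var simp: inc_idx_def\<close>)
    then show "f' \<in> zpoly (inc_idx m r)" unfolding f(2) pistar_def by simp
  qed
  define S' where "S' = {p \<in> cspace (inc_idx m r). \<forall>f'\<in>F'. f' p = 0}"
  have S'c: "zclosed (inc_idx m r) S'" unfolding S'_def by (rule zclosed_zero[OF F'])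
  have BS': "?B \<subseteq> S'"
  proof
    fix p assume "p \<in> ?B"
    then obtain t where t: "t \<in> U" "p = phi m r \<delta> xN xD t" by blast
    have "psi m \<delta> t \<in> zclosure ?I ?A" using t zclosure_sup by blast
    then have "\<forall>f\<in>F. f (psi m \<delta> t) = 0" using F(2) by blast
    then show "p \<in> S'" unfolding S'_def F'_def using t by (auto simp: phi_cspace pistar_phi)
  qed
  have "pistar ` zclosure (inc_idx m r) ?B \<subseteq> zclosure ?I ?A"
  proof
    fix q assume "q \<in> pistar ` zclosure (inc_idx m r) ?B"
    then obtain p where p: "p \<in> zclosure (inc_idx m r) ?B" "q = pistar p" by blast
    have pS: "p \<in> S'" using zclosure_min[OF S'c BS'] p(1) by blast
    have "q \<in> cspace ?I"
      unfolding cspace_def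
    proof (intro CollectI allI impI)
      fix a assume "a \<notin> ?I"
      then have "Inl a \<notin> inc_idx m r" unfolding inc_idx_def by auto
      then show "q a = 0" using pS p(2) unfolding S'_def cspace_def pistar_def by auto
    qed
    moreover have "\<forall>f\<in>F. f q = 0" using pS p(2) unfolding S'_def F'_def by auto
    ultimately show "q \<in> zclosure ?I ?A" using F(2) by blast
  qed
  then have "zclosure ?I (pistar ` zclosure (inc_idx m r) ?B) \<subseteq> zclosure ?I (zclosure ?I ?A)"
    by (rule zclosure_mono)
  also have "\<dots> = zclosure ?I ?A" by (rule zclosure_idem[OF clA])
  finally show "zclosure ?I (pistar ` zclosure (inc_idx m r) ?B) \<subseteq> zclosure ?I ?A" .
qed

theorem theorem4p6:
  fixes U :: "(complex ^ 'n) set"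
    and m r :: nat
    and e :: "nat \<Rightarrow> nat"
    and \<alpha>N \<alpha>D xN xD :: "nat \<Rightarrow> ('n + nat \<Rightarrow> complex) \<Rightarrow> complex"
    and \<delta> :: "nat \<Rightarrow> complex ^ 'n \<Rightarrow> complex"
  assumes U: "open U" "connected U" "U \<noteq> {}"
    and tower_exps: "\<forall>i<m. e i \<ge> 1"
    and tower_alpha_poly: "\<forall>i<m. \<alpha>N i \<in> zpoly (tower_idx i) \<and> \<alpha>D i \<in> zpoly (tower_idx i)"
    and tower_alpha_den: "\<forall>i<m. \<forall>t\<in>U. \<alpha>D i (psi m \<delta> t) \<noteq> 0"
    and tower_rel: "\<forall>i<m. \<forall>t\<in>U. (\<delta> i t) ^ (e i) = \<alpha>N i (psi m \<delta> t) / \<alpha>D i (psi m \<delta> t)"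
    and tower_holo: "\<forall>i<m. mholo_on U (\<delta> i)"
    and r_gt: "r > CARD('n)"
    and x_poly: "\<forall>j<r. xN j \<in> zpoly (tower_idx m) \<and> xD j \<in> zpoly (tower_idx m)"
    and x_den: "\<forall>j<r. \<forall>t\<in>U. xD j (psi m \<delta> t) \<noteq> 0"
    and jacobian_rank: "\<exists>t\<in>U. \<exists>\<sigma> :: 'n \<Rightarrow> nat. (\<forall>k. \<sigma> k < r) \<and>
        det (\<chi> k l. mpderiv (radpar_x m \<delta> xN xD (\<sigma> k)) l t) \<noteq> 0"
  shows "zirreducible (tower_idx m) (zclosure (tower_idx m) (psi m \<delta> ` U))
       \<and> has_zdim (tower_idx m) (zclosure (tower_idx m) (psi m \<delta> ` U)) CARD('n)
       \<and> zclosure (tower_idx m) (psi m \<delta> ` U)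
           = zclosure (tower_idx m) (pistar ` zclosure (inc_idx m r) (phi m r \<delta> xN xD ` U))"
proof (intro conjI)
  let ?I = "tower_idx m :: ('n + nat) set"
  let ?V = "zclosure ?I (psi m \<delta> ` U)"
  let ?T = "range Inl :: ('n + nat) set"
  show irr: "zirreducible ?I ?V" by (rule irr_psi[OF U(3) dom_psiU[OF U(1,2) tower_holo]])
  have dom: "zdom ?I ?V" by (rule zirr_dom[OF irr])
  have Vne: "?V \<noteq> {}" using U(3) zclosure_sup by blast
  have gd: "\<forall>c\<in>?I. good ?V ?T (\<lambda>p. p c)"
    by (rule good_coords[OF U tower_exps tower_alpha_poly tower_alpha_den tower_rel tower_holo])
  have TI: "?T \<subseteq> ?I" unfolding tower_idx_def by auto
  have cT: "card ?T = CARD('n)" by (simp add: card_image)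
  have bound: "\<forall>S. S \<subseteq> ?I \<longrightarrow> indep ?V S \<longrightarrow> card S \<le> CARD('n)"
    using indep_card_bound[OF finite_tower_idx TI dom Vne gd] cT by auto
  show "has_zdim ?I ?V CARD('n)"
    unfolding has_zdim_def
  proof
    show "zchain ?I ?V CARD('n)" by (rule lower_chain[OF U(1,3) tower_holo])
    show "\<not> zchain ?I ?V (Suc CARD('n))"
    proof
      assume "zchain ?I ?V (Suc CARD('n))"
      then have "Suc CARD('n) \<le> CARD('n)" by (rule chain_bound[OF finite_tower_idx _ bound])
      then show False by simp
    qed
  qed
  show "?V = zclosure ?I (pistar ` zclosure (inc_idx m r) (phi m r \<delta> xN xD ` U))"
    by (rule closure_eq)
qed


end
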